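(* Every graph $G$ satisfies $\mathrm{cop}(G)\le \mathrm{tw}(G)/2+1$.
   Context: All graphs are finite, undirected, without loops or multiple edges. A tree decomposition of $G$ is a pair $(T,\{W_x: x\in V(T)\})$ with $T$ a tree and $W_x\subseteq V(G)$ such that $\bigcup_x W_x=V(G)$, every edge of $G$ has both ends in some $W_x$, and for each $u\in V(G)$ the set $\{x: u\in W_x\}$ induces a subtree of $T$; its width is $\max_x |W_x|-1$, and $\mathrm{tw}(G)$ is the minimum width of a tree decomposition of $G$. Cops and Robber game on a connected graph: for an integer $k\ge 1$, the cop player places $k$ cops on (not necessarily distinct) vertices, then the robber is placed on a vertex; then, starting with the cops, the players alternate moves. In a cop move, each cop either stays or moves to an adjacent vertex; in a robber move, the robber stays or moves to an adjacent vertex. The cops win if at some point a cop and the robber occupy the same vertex. Both players have complete information. The cop number $\mathrm{cop}(G)$ of a connected graph $G$ is the smallest $k$ such that the cops have a winning strategy with $k$ cops; for a non-connected graph it is the maximum cop number of its connected components. *)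

theory Defs
  imports Complex_Main
begin

definition simple_graph :: "'a set \<Rightarrow> ('a \<Rightarrow> 'a \<Rightarrow> bool) \<Rightarrow> bool" where
  "simple_graph V E \<longleftrightarrow> finite V \<and> (\<forall>x y. E x y \<longrightarrow> x \<in> V \<and> y \<in> V)
     \<and> (\<forall>x y. E x y \<longrightarrow> E y x) \<and> (\<forall>x. \<not> E x x)"

definition restrict_adj :: "'a set \<Rightarrow> ('a \<Rightarrow> 'a \<Rightarrow> bool) \<Rightarrow> 'a \<Rightarrow> 'a \<Rightarrow> bool" where
  "restrict_adj S E = (\<lambda>x y. E x y \<and> x \<in> S \<and> y \<in> S)"

definition connected_on :: "'a set \<Rightarrow> ('a \<Rightarrow> 'a \<Rightarrow> bool) \<Rightarrow> bool" where
  "connected_on S E \<longleftrightarrow> (\<forall>x\<in>S. \<forall>y\<in>S. (restrict_adj S E)\<^sup>*\<^sup>* x y)"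

definition is_cycle :: "'a set \<Rightarrow> ('a \<Rightarrow> 'a \<Rightarrow> bool) \<Rightarrow> 'a list \<Rightarrow> bool" where
  "is_cycle V E cs \<longleftrightarrow> length cs \<ge> 3 \<and> distinct cs \<and> set cs \<subseteq> V
     \<and> (\<forall>i. Suc i < length cs \<longrightarrow> E (cs ! i) (cs ! Suc i))
     \<and> E (last cs) (hd cs)"

definition is_tree :: "'b set \<Rightarrow> ('b \<Rightarrow> 'b \<Rightarrow> bool) \<Rightarrow> bool" where
  "is_tree I F \<longleftrightarrow> simple_graph I F \<and> I \<noteq> {} \<and> connected_on I F
     \<and> (\<nexists>cs. is_cycle I F cs)"

definition tree_decomposition ::
  "'a set \<Rightarrow> ('a \<Rightarrow> 'a \<Rightarrow> bool) \<Rightarrow> 'b set \<Rightarrow> ('b \<Rightarrow> 'b \<Rightarrow> bool) \<Rightarrow> ('b \<Rightarrow> 'a set) \<Rightarrow> bool" where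
  "tree_decomposition V E I F W \<longleftrightarrow>
     is_tree I F
     \<and> (\<forall>x\<in>I. W x \<subseteq> V)
     \<and> (\<Union>x\<in>I. W x) = V
     \<and> (\<forall>u v. E u v \<longrightarrow> (\<exists>x\<in>I. u \<in> W x \<and> v \<in> W x))
     \<and> (\<forall>u\<in>V. connected_on {x\<in>I. u \<in> W x} F)"

definition td_width :: "'b set \<Rightarrow> ('b \<Rightarrow> 'a set) \<Rightarrow> int" where
  "td_width I W = int (Max ((\<lambda>x. card (W x)) ` I)) - 1"

(* treewidth; the decomposition trees are taken with nodes in nat (every finite
   tree is isomorphic to one with nodes in nat) *)
definition treewidth :: "'a set \<Rightarrow> ('a \<Rightarrow> 'a \<Rightarrow> bool) \<Rightarrow> int" where
  "treewidth V E = (LEAST w. \<exists>(I::nat set) F W. tree_decomposition V E I F W \<and> w = td_width I W)"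

definition step_ok :: "('a \<Rightarrow> 'a \<Rightarrow> bool) \<Rightarrow> 'a \<Rightarrow> 'a \<Rightarrow> bool" where
  "step_ok E x y \<longleftrightarrow> x = y \<or> E x y"

(* A cop strategy sigma maps the list of robber positions observed so far to the
   positions of the cops: sigma [] is the initial placement; after the robber has
   occupied r_0,...,r_{n-1} (r_0 his initial position, r_j his position after his
   j-th move) the cops move to sigma [r_0,...,r_{n-1}]. Since the cop strategy is deterministic,
   quantifying over all such sequences is the same as quantifying over all robber
   strategies. The robber is caught if at some point a cop and the robber share a
   vertex: either right after the robber's n-th placement/move (cops at
   sigma [r_0..r_{n-1}]) or right after the cops' reply (cops at sigma [r_0..r_n]). *)
definition cop_strategy :: "'a set \<Rightarrow> ('a \<Rightarrow> 'a \<Rightarrow> bool) \<Rightarrow> nat \<Rightarrow> ('a list \<Rightarrow> nat \<Rightarrow> 'a) \<Rightarrow> bool" where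
  "cop_strategy V E k \<sigma> \<longleftrightarrow>
     (\<forall>rs. set rs \<subseteq> V \<longrightarrow> (\<forall>i<k. \<sigma> rs i \<in> V))
     \<and> (\<forall>rs r. set rs \<subseteq> V \<and> r \<in> V \<longrightarrow>
          (\<forall>i<k. step_ok (restrict_adj V E) (\<sigma> rs i) (\<sigma> (rs @ [r]) i)))"

definition robber_play :: "'a set \<Rightarrow> ('a \<Rightarrow> 'a \<Rightarrow> bool) \<Rightarrow> (nat \<Rightarrow> 'a) \<Rightarrow> bool" where
  "robber_play V E r \<longleftrightarrow> r 0 \<in> V \<and> (\<forall>n. step_ok (restrict_adj V E) (r n) (r (Suc n)))"

definition caught :: "nat \<Rightarrow> ('a list \<Rightarrow> nat \<Rightarrow> 'a) \<Rightarrow> (nat \<Rightarrow> 'a) \<Rightarrow> bool" where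
  "caught k \<sigma> r \<longleftrightarrow> (\<exists>n. \<exists>i<k.
      \<sigma> (map r [0..<n]) i = r n \<or> \<sigma> (map r [0..<Suc n]) i = r n)"

definition cops_win :: "'a set \<Rightarrow> ('a \<Rightarrow> 'a \<Rightarrow> bool) \<Rightarrow> nat \<Rightarrow> bool" where
  "cops_win V E k \<longleftrightarrow> (\<exists>\<sigma>. cop_strategy V E k \<sigma> \<and>
      (\<forall>r. robber_play V E r \<longrightarrow> caught k \<sigma> r))"

definition cop_number_conn :: "'a set \<Rightarrow> ('a \<Rightarrow> 'a \<Rightarrow> bool) \<Rightarrow> nat" where
  "cop_number_conn V E = (LEAST k. k \<ge> 1 \<and> cops_win V E k)"

definition component_of :: "'a set \<Rightarrow> ('a \<Rightarrow> 'a \<Rightarrow> bool) \<Rightarrow> 'a \<Rightarrow> 'a set" where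
  "component_of V E v = {u\<in>V. (restrict_adj V E)\<^sup>*\<^sup>* v u}"

definition components :: "'a set \<Rightarrow> ('a \<Rightarrow> 'a \<Rightarrow> bool) \<Rightarrow> 'a set set" where
  "components V E = component_of V E ` V"

definition cop_number :: "'a set \<Rightarrow> ('a \<Rightarrow> 'a \<Rightarrow> bool) \<Rightarrow> nat" where
  "cop_number V E = Max ((\<lambda>C. cop_number_conn C (restrict_adj C E)) ` components V E)"

end

theory Submission
  imports Defs
begin

section \<open>Game framework\<close>

locale game =
  fixes V :: "'a set" and E :: "'a \<Rightarrow> 'a \<Rightarrow> bool" and k :: nat
  assumes finV: "finite V"
begin

definition cmove :: "(nat \<Rightarrow> 'a) \<Rightarrow> (nat \<Rightarrow> 'a) \<Rightarrow> bool" where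
  "cmove c c' \<longleftrightarrow> (\<forall>i<k. c' i \<in> V \<and> step_ok (restrict_adj V E) (c i) (c' i))"

definition hit :: "(nat \<Rightarrow> 'a) \<Rightarrow> 'a \<Rightarrow> bool" where
  "hit c r \<longleftrightarrow> (\<exists>i<k. c i = r)"

primrec winR :: "nat \<Rightarrow> (nat \<Rightarrow> 'a) \<Rightarrow> 'a \<Rightarrow> bool" where
  "winR 0 c r = hit c r"
| "winR (Suc n) c r = (hit c r \<or> (\<forall>r'. step_ok (restrict_adj V E) r r' \<longrightarrow>
      hit c r' \<or> (\<exists>c'. cmove c c' \<and> winR n c' r')))"

definition winC :: "nat \<Rightarrow> (nat \<Rightarrow> 'a) \<Rightarrow> 'a \<Rightarrow> bool" where
  "winC n c r \<longleftrightarrow> hit c r \<or> (\<exists>c'. cmove c c' \<and> winR n c' r)"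

lemma winR_mono: "winR n c r \<Longrightarrow> n \<le> n' \<Longrightarrow> winR n' c r"
proof (induction n arbitrary: n' c r)
  case 0
  then show ?case by (cases n') auto
next
  case (Suc n)
  then obtain n'' where n': "n' = Suc n''" and "n \<le> n''" by (cases n') auto
  from Suc.prems(1) have "hit c r \<or> (\<forall>r'. step_ok (restrict_adj V E) r r' \<longrightarrow>
      hit c r' \<or> (\<exists>c'. cmove c c' \<and> winR n c' r'))" by (simp only: winR.simps)
  then show ?case unfolding n' using Suc.IH[OF _ \<open>n \<le> n''\<close>] by (simp only: winR.simps) blast
qed

lemma winC_mono: "winC n c r \<Longrightarrow> n \<le> n' \<Longrightarrow> winC n' c r"
  unfolding winC_def by (auto intro: winR_mono)

lemma finite_max:
  fixes Q :: "nat \<Rightarrow> 'b \<Rightarrow> bool"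
  assumes "finite S" "\<forall>s\<in>S. \<exists>n. Q n s" "\<And>n n' s. Q n s \<Longrightarrow> n \<le> n' \<Longrightarrow> Q n' s"
  shows "\<exists>N. \<forall>s\<in>S. Q N s"
  using assms(1,2)
proof (induction S rule: finite_induct)
  case empty then show ?case by auto
next
  case (insert x S)
  then obtain N where N: "\<forall>s\<in>S. Q N s" by auto
  obtain n where n: "Q n x" using insert by auto
  show ?case
  proof (rule exI[of _ "max N n"], rule ballI)
    fix s assume "s \<in> insert x S"
    then show "Q (max N n) s"
    proof
      assume "s = x" then show ?thesis using n assms(3)[of n x "max N n"] max.cobounded2[of n N] by blast
    next
      assume "s \<in> S" then show ?thesis using N assms(3)[of N s "max N n"] max.cobounded1[of N n] by blast
    qed
  qed
qed


definition lexl :: "nat \<times> nat \<times> nat \<Rightarrow> nat \<times> nat \<times> nat \<Rightarrow> bool" where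
  "lexl x y \<longleftrightarrow> (x, y) \<in> less_than <*lex*> less_than <*lex*> less_than"

lemma variant:
  assumes step: "\<And>a b1 b2 c r. P a b1 b2 c r \<Longrightarrow> \<exists>c'. cmove c c' \<and> (hit c' r \<or>
     (\<forall>r'. step_ok (restrict_adj V E) r r' \<longrightarrow> hit c' r' \<or>
        (\<exists>a' b1' b2'. lexl (a', b1', b2') (a, b1, b2) \<and> P a' b1' b2' c' r')))"
  shows "P a b1 b2 c r \<Longrightarrow> \<exists>n. winC n c r"
proof -
  have wf: "wf (less_than <*lex*> less_than <*lex*> less_than)" by auto
  have "\<forall>c r. P a b1 b2 c r \<longrightarrow> (\<exists>n. winC n c r)"
  proof (induction "(a, b1, b2)" arbitrary: a b1 b2 rule: wf_induct[OF wf])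
    case 1
    show ?case
    proof (intro allI impI)
      fix c r assume Pc: "P a b1 b2 c r"
      obtain c' where cm: "cmove c c'" and alt: "hit c' r \<or>
        (\<forall>r'. step_ok (restrict_adj V E) r r' \<longrightarrow> hit c' r' \<or>
          (\<exists>a' b1' b2'. lexl (a', b1', b2') (a, b1, b2) \<and> P a' b1' b2' c' r'))"
        using step[OF Pc] by blast
      show "\<exists>n. winC n c r"
      proof (cases "hit c' r")
        case True
        then have "winC 0 c r" unfolding winC_def using cm by (auto intro!: exI[of _ c'])
        then show ?thesis by blast
      next
        case False
        let ?S = "{r'. step_ok (restrict_adj V E) r r'}"
        have fin: "finite ?S"
          by (rule finite_subset[of _ "insert r V"]) (auto simp: step_ok_def restrict_adj_def finV)
        have "\<forall>s\<in>?S. \<exists>n. hit c' s \<or> winC n c' s"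
        proof
          fix s assume "s \<in> ?S"
          then have "hit c' s \<or> (\<exists>a' b1' b2'. lexl (a', b1', b2') (a, b1, b2) \<and> P a' b1' b2' c' s)"
            using alt False by auto
          then show "\<exists>n. hit c' s \<or> winC n c' s"
          proof
            assume "\<exists>a' b1' b2'. lexl (a', b1', b2') (a, b1, b2) \<and> P a' b1' b2' c' s"
            then obtain a' b1' b2' where "lexl (a', b1', b2') (a, b1, b2)" "P a' b1' b2' c' s" by blast
            then show ?thesis using 1 unfolding lexl_def by blast
          qed auto
        qed
        then obtain N where N: "\<forall>s\<in>?S. hit c' s \<or> winC N c' s"
          using finite_max[OF fin, of "\<lambda>n s. hit c' s \<or> winC n c' s"] winC_mono by blast
        have "winR (Suc N) c' r" using N by (auto simp: winC_def)
        then have "winC (Suc N) c r" unfolding winC_def using cm by blast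
        then show ?thesis by blast
      qed
    qed
  qed
  then show "P a b1 b2 c r \<Longrightarrow> \<exists>n. winC n c r" by blast
qed

definition pickc :: "(nat \<Rightarrow> 'a) \<Rightarrow> 'a \<Rightarrow> (nat \<Rightarrow> 'a)" where
  "pickc c r = (if (\<exists>c' n. cmove c c' \<and> winR n c' r)
     then (SOME c'. cmove c c' \<and> winR (LEAST n. \<exists>c'. cmove c c' \<and> winR n c' r) c' r) else c)"

definition st :: "(nat \<Rightarrow> 'a) \<Rightarrow> 'a list \<Rightarrow> (nat \<Rightarrow> 'a)" where
  "st c0 rs = fold (\<lambda>r c. pickc c r) rs c0"

lemma st_snoc: "st c0 (rs @ [r]) = pickc (st c0 rs) r"
  by (simp add: st_def)

lemma pickc_V: "\<forall>i<k. c i \<in> V \<Longrightarrow> i < k \<Longrightarrow> pickc c r i \<in> V \<and> step_ok (restrict_adj V E) (c i) (pickc c r i)"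
proof -
  assume cV: "\<forall>i<k. c i \<in> V" and ik: "i < k"
  show ?thesis
  proof (cases "\<exists>c' n. cmove c c' \<and> winR n c' r")
    case True
    then have "\<exists>c'. cmove c c' \<and> winR (LEAST n. \<exists>c'. cmove c c' \<and> winR n c' r) c' r"
      using LeastI_ex[of "\<lambda>n. \<exists>c'. cmove c c' \<and> winR n c' r"] True by blast
    then have h: "cmove c (SOME c'. cmove c c' \<and> winR (LEAST n. \<exists>c'. cmove c c' \<and> winR n c' r) c' r)"
      by (rule conjunct1[OF someI_ex])
    have "pickc c r = (SOME c'. cmove c c' \<and> winR (LEAST n. \<exists>c'. cmove c c' \<and> winR n c' r) c' r)"
      unfolding pickc_def using True by (simp only: if_True)
    then have "cmove c (pickc c r)" using h by simp
    then show ?thesis using ik by (auto simp: cmove_def)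
  next
    case False
    then show ?thesis using cV ik by (auto simp: pickc_def step_ok_def)
  qed
qed

lemma st_V: "\<forall>i<k. c0 i \<in> V \<Longrightarrow> \<forall>i<k. st c0 rs i \<in> V"
proof (induction rs rule: rev_induct)
  case Nil then show ?case by (simp add: st_def)
next
  case (snoc r rs) then show ?case using pickc_V[of "st c0 rs"] by (simp only: st_snoc) blast
qed

lemma strategy_ok: "\<forall>i<k. c0 i \<in> V \<Longrightarrow> cop_strategy V E k (st c0)"
proof -
  assume c0: "\<forall>i<k. c0 i \<in> V"
  show ?thesis unfolding cop_strategy_def
  proof (intro conjI allI impI)
    fix rs i assume "i < k" then show "st c0 rs i \<in> V" using st_V[OF c0] by blast
  next
    fix rs r i assume "i < k"
    have "\<forall>i<k. st c0 rs i \<in> V" using st_V[OF c0] by blast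
    from pickc_V[OF this \<open>i < k\<close>, of r]
    show "step_ok (restrict_adj V E) (st c0 rs i) (st c0 (rs @ [r]) i)" by (simp only: st_snoc)
  qed
qed

lemma catch:
  assumes c0: "\<forall>i<k. c0 i \<in> V" and rp: "robber_play V E r"
  shows "winC n (st c0 (map r [0..<j])) (r j) \<Longrightarrow> caught k (st c0) r"
proof (induction n arbitrary: j rule: less_induct)
  case (less n)
  let ?c = "st c0 (map r [0..<j])"
  have cs: "st c0 (map r [0..<Suc j]) = pickc ?c (r j)" by (simp add: st_snoc)
  show ?case
  proof (cases "hit ?c (r j)")
    case True then show ?thesis unfolding caught_def hit_def by blast
  next
    case False
    then obtain c' where "cmove ?c c'" "winR n c' (r j)" using less.prems unfolding winC_def by blast
    then have ex: "\<exists>c' n. cmove ?c c' \<and> winR n c' (r j)" by blast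
    define N where "N = (LEAST n. \<exists>c'. cmove ?c c' \<and> winR n c' (r j))"
    have Nn: "N \<le> n" unfolding N_def using \<open>cmove ?c c'\<close> \<open>winR n c' (r j)\<close> by (metis (mono_tags, lifting) Least_le)
    have "\<exists>c'. cmove ?c c' \<and> winR N c' (r j)" unfolding N_def using ex LeastI_ex[of "\<lambda>n. \<exists>c'. cmove ?c c' \<and> winR n c' (r j)"] by blast
    then have w: "winR N (pickc ?c (r j)) (r j)"
    proof -
      assume h: "\<exists>c'. cmove ?c c' \<and> winR N c' (r j)"
      have "pickc ?c (r j) = (SOME c'. cmove ?c c' \<and> winR N c' (r j))"
        unfolding pickc_def N_def using ex by (simp only: if_True)
      then show ?thesis using someI_ex[OF h] by simp
    qed
    let ?c1 = "st c0 (map r [0..<Suc j])"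
    have w1: "winR N ?c1 (r j)" using w cs by simp
    show ?thesis
    proof (cases N)
      case 0
      then have "hit ?c1 (r j)" using w1 by simp
      then show ?thesis unfolding caught_def hit_def by blast
    next
      case (Suc N')
      show ?thesis
      proof (cases "hit ?c1 (r j)")
        case True
        then show ?thesis unfolding caught_def hit_def by blast
      next
        case False
        have "step_ok (restrict_adj V E) (r j) (r (Suc j))" using rp unfolding robber_play_def by blast
        then have "hit ?c1 (r (Suc j)) \<or> winC N' ?c1 (r (Suc j))"
        proof -
          have "winR (Suc N') ?c1 (r j)" using w1 Suc by simp
          then have "\<forall>r'. step_ok (restrict_adj V E) (r j) r' \<longrightarrow> hit ?c1 r' \<or> (\<exists>c'. cmove ?c1 c' \<and> winR N' c' r')"
            using False by (simp only: winR.simps) blast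
          then show ?thesis using \<open>step_ok (restrict_adj V E) (r j) (r (Suc j))\<close> unfolding winC_def by blast
        qed
        then show ?thesis
        proof
          assume "hit ?c1 (r (Suc j))"
          then show ?thesis unfolding caught_def hit_def by blast
        next
          assume "winC N' ?c1 (r (Suc j))"
          moreover have "N' < n" using Nn Suc by simp
          ultimately show ?thesis using less.IH[of N' "Suc j"] by blast
        qed
      qed
    qed
  qed
qed

lemma cops_win_from:
  assumes c0: "\<forall>i<k. c0 i \<in> V" and win: "\<forall>r0\<in>V. \<exists>n. winC n c0 r0"
  shows "cops_win V E k"
  unfolding cops_win_def
proof (intro exI conjI allI impI)
  show "cop_strategy V E k (st c0)" using strategy_ok[OF c0] .
  fix r assume rp: "robber_play V E r"
  then have "r 0 \<in> V" unfolding robber_play_def by blast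
  then obtain n where "winC n c0 (r 0)" using win by blast
  then have "winC n (st c0 (map r [0..<0])) (r 0)" by (simp add: st_def)
  then show "caught k (st c0) r" using catch[OF c0 rp] by blast
qed

end



section \<open>Graph basics\<close>

lemma restrict_mono: "S \<subseteq> T \<Longrightarrow> (restrict_adj S E)\<^sup>*\<^sup>* x y \<Longrightarrow> (restrict_adj T E)\<^sup>*\<^sup>* x y"
proof -
  assume st: "S \<subseteq> T" and p: "(restrict_adj S E)\<^sup>*\<^sup>* x y"
  have h: "\<And>a b. restrict_adj S E a b \<longrightarrow> restrict_adj T E a b" using st by (auto simp: restrict_adj_def)
  from mono_rtranclp[of "restrict_adj S E" "restrict_adj T E", OF h] p show ?thesis by blast
qed

lemma rt_sym:
  assumes sym: "\<forall>x y. E x y \<longrightarrow> E y x"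
  shows "(restrict_adj S E)\<^sup>*\<^sup>* x y \<Longrightarrow> (restrict_adj S E)\<^sup>*\<^sup>* y x"
proof (induction rule: rtranclp_induct)
  case base then show ?case by simp
next
  case (step y z)
  then have "restrict_adj S E z y" using sym by (auto simp: restrict_adj_def)
  then show ?case using step.IH by (rule converse_rtranclp_into_rtranclp)
qed

definition compo :: "'a set \<Rightarrow> ('a \<Rightarrow> 'a \<Rightarrow> bool) \<Rightarrow> 'a \<Rightarrow> 'a set" where
  "compo S E r = {v\<in>S. (restrict_adj S E)\<^sup>*\<^sup>* r v}"

lemma in_compo_path:
  assumes "r \<in> S"
  shows "(restrict_adj S E)\<^sup>*\<^sup>* r v \<Longrightarrow> (restrict_adj (compo S E r) E)\<^sup>*\<^sup>* r v"
proof (induction rule: rtranclp_induct)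
  case base then show ?case by simp
next
  case (step b c)
  then have "b \<in> compo S E r" "c \<in> compo S E r"
    by (auto simp: compo_def restrict_adj_def intro: rtranclp.rtrancl_into_rtrancl)
  then have "restrict_adj (compo S E r) E b c" using step(2) by (auto simp: restrict_adj_def)
  with step.IH show ?case by (rule rtranclp.rtrancl_into_rtrancl)
qed

lemma compo_conn:
  assumes sym: "\<forall>x y. E x y \<longrightarrow> E y x" and "r \<in> S"
  shows "connected_on (compo S E r) E"
  unfolding connected_on_def
proof (intro ballI)
  fix x y assume "x \<in> compo S E r" "y \<in> compo S E r"
  then have "(restrict_adj (compo S E r) E)\<^sup>*\<^sup>* r x" "(restrict_adj (compo S E r) E)\<^sup>*\<^sup>* r y"
    using in_compo_path[OF assms(2)] by (auto simp: compo_def)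
  then show "(restrict_adj (compo S E r) E)\<^sup>*\<^sup>* x y"
    using rt_sym[OF sym] by (meson rtranclp_trans)
qed

lemma compo_sub: "compo S E r \<subseteq> S" by (auto simp: compo_def)

lemma r_in_compo: "r \<in> S \<Longrightarrow> r \<in> compo S E r" by (auto simp: compo_def)

section \<open>Trees\<close>

lemma rt_path_distinct:
  "R\<^sup>*\<^sup>* a b \<Longrightarrow> \<exists>ps. ps \<noteq> [] \<and> hd ps = a \<and> last ps = b \<and> distinct ps \<and>
     (\<forall>i. Suc i < length ps \<longrightarrow> R (ps!i) (ps!Suc i))"
proof (induction rule: rtranclp_induct)
  case base
  then show ?case by (intro exI[of _ "[a]"]) auto
next
  case (step b c)
  then obtain ps where ps: "ps \<noteq> []" "hd ps = a" "last ps = b" "distinct ps"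
    "\<forall>i. Suc i < length ps \<longrightarrow> R (ps!i) (ps!Suc i)" by blast
  show ?case
  proof (cases "c \<in> set ps")
    case False
    have "\<forall>i. Suc i < length (ps @ [c]) \<longrightarrow> R ((ps @ [c])!i) ((ps @ [c])!Suc i)"
    proof (intro allI impI)
      fix i assume i: "Suc i < length (ps @ [c])"
      show "R ((ps @ [c])!i) ((ps @ [c])!Suc i)"
      proof (cases "Suc i < length ps")
        case True then show ?thesis using ps(5) by (simp add: nth_append)
      next
        case False
        then have "Suc i = length ps" using i by simp
        then have ii: "i = length ps - 1" by simp
        then have "(ps @ [c])!i = last ps" "(ps @ [c])!Suc i = c" using ps(1) \<open>Suc i = length ps\<close>
          by (auto simp: nth_append last_conv_nth)
        then show ?thesis using ps(3) step(2) by simp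
      qed
    qed
    then show ?thesis using ps False by (intro exI[of _ "ps @ [c]"]) auto
  next
    case True
    then obtain j where j: "j < length ps" "ps ! j = c" by (auto simp: in_set_conv_nth)
    let ?qs = "take (Suc j) ps"
    have "?qs \<noteq> []" using ps(1) by simp
    moreover have "hd ?qs = a" using ps(1,2) by (simp add: hd_take)
    moreover have "last ?qs = c" using j by (simp add: take_Suc_conv_app_nth)
    moreover have "distinct ?qs" using ps(4) by simp
    moreover have "\<forall>i. Suc i < length ?qs \<longrightarrow> R (?qs!i) (?qs!Suc i)" using ps(5) by auto
    ultimately show ?thesis by blast
  qed
qed

lemma first_step:
  "(restrict_adj J F)\<^sup>*\<^sup>* u a \<Longrightarrow> a \<noteq> u \<Longrightarrow>
   \<exists>y. F u y \<and> y \<in> J \<and> u \<in> J \<and> (restrict_adj (J - {u}) F)\<^sup>*\<^sup>* y a"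
proof (induction rule: rtranclp_induct)
  case base then show ?case by simp
next
  case (step b c)
  show ?case
  proof (cases "b = u")
    case True
    then show ?thesis using step by (auto simp: restrict_adj_def)
  next
    case False
    then obtain y where y: "F u y" "y \<in> J" "u \<in> J" "(restrict_adj (J - {u}) F)\<^sup>*\<^sup>* y b"
      using step by blast
    have "restrict_adj (J - {u}) F b c" using step(2) False step(4) by (auto simp: restrict_adj_def)
    then show ?thesis using y by (meson rtranclp.rtrancl_into_rtrancl)
  qed
qed

lemma no_two:
  assumes tree: "is_tree I F" and "F u y1" "F u y2" "y1 \<noteq> y2"
    and p: "(restrict_adj (I - {u}) F)\<^sup>*\<^sup>* y1 y2"
  shows False
proof -
  have sg: "simple_graph I F" using tree by (simp add: is_tree_def)
  then have uI: "u \<in> I" and sym: "\<forall>x y. F x y \<longrightarrow> F y x" and irr: "\<forall>x. \<not> F x x"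
    using assms(2) by (auto simp: simple_graph_def)
  have y2: "y2 \<in> I - {u}" using assms(3) sg irr by (auto simp: simple_graph_def)
  obtain ps where ps: "ps \<noteq> []" "hd ps = y1" "last ps = y2" "distinct ps"
    "\<forall>i. Suc i < length ps \<longrightarrow> restrict_adj (I - {u}) F (ps!i) (ps!Suc i)"
    using rt_path_distinct[OF p] by blast
  have setps: "set ps \<subseteq> I - {u}"
  proof
    fix v assume "v \<in> set ps"
    then obtain i where i: "i < length ps" "ps ! i = v" by (auto simp: in_set_conv_nth)
    show "v \<in> I - {u}"
    proof (cases "Suc i < length ps")
      case True then show ?thesis using ps(5) i by (auto simp: restrict_adj_def)
    next
      case False
      then have "i = length ps - 1" using i by simp
      then have "v = last ps" using i ps(1) by (simp add: last_conv_nth)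
      then show ?thesis using ps(3) y2 by simp
    qed
  qed
  have len: "length ps \<ge> 2"
  proof (rule ccontr)
    assume "\<not> length ps \<ge> 2"
    moreover have "length ps \<noteq> 0" using ps(1) by simp
    ultimately have "length ps = 1" by linarith
    then have "hd ps = last ps" by (cases ps) auto
    then show False using ps(2,3) assms(4) by simp
  qed
  let ?cs = "u # ps"
  have "is_cycle I F ?cs"
    unfolding is_cycle_def
  proof (intro conjI allI impI)
    show "3 \<le> length ?cs" using len by simp
    show "distinct ?cs" using ps(4) setps by auto
    show "set ?cs \<subseteq> I" using setps uI by auto
  next
    fix i assume i: "Suc i < length ?cs"
    show "F (?cs ! i) (?cs ! Suc i)"
    proof (cases i)
      case 0 then show ?thesis using ps(1,2) assms(2) by (cases ps) auto
    next
      case (Suc i')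
      then have "Suc i' < length ps" using i by simp
      then show ?thesis using ps(5) Suc by (auto simp: restrict_adj_def)
    qed
  next
    have "last ?cs = y2" using ps(1,3) by simp
    then show "F (last ?cs) (hd ?cs)" using assms(3) sym by simp
  qed
  then show False using tree by (auto simp: is_tree_def)
qed



locale tdec =
  fixes V :: "'a set" and E :: "'a \<Rightarrow> 'a \<Rightarrow> bool" and I :: "'b set" and F and W :: "'b \<Rightarrow> 'a set"
  assumes sg: "simple_graph V E" and td: "tree_decomposition V E I F W"
begin

definition nbr :: "'a set \<Rightarrow> 'a set" where
  "nbr D = {v\<in>V. v \<notin> D \<and> (\<exists>d\<in>D. E d v)}"

lemma tree: "is_tree I F" using td by (simp add: tree_decomposition_def)
lemma sgI: "simple_graph I F" using tree by (simp add: is_tree_def)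
lemma symF: "\<forall>x y. F x y \<longrightarrow> F y x" using sgI by (simp add: simple_graph_def)
lemma FI: "F x y \<Longrightarrow> x \<in> I \<and> y \<in> I" using sgI by (simp add: simple_graph_def)
lemma finI: "finite I" using sgI by (simp add: simple_graph_def)
lemma connI: "connected_on I F" using tree by (simp add: is_tree_def)
lemma WV: "x \<in> I \<Longrightarrow> W x \<subseteq> V" using td by (simp add: tree_decomposition_def)
lemma cover: "v \<in> V \<Longrightarrow> \<exists>x\<in>I. v \<in> W x" using td by (auto simp: tree_decomposition_def)
lemma edge_bag: "E u v \<Longrightarrow> \<exists>x\<in>I. u \<in> W x \<and> v \<in> W x" using td by (simp add: tree_decomposition_def)
lemma subconn: "v \<in> V \<Longrightarrow> connected_on {x\<in>I. v \<in> W x} F" using td by (simp add: tree_decomposition_def)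
lemma EV: "E x y \<Longrightarrow> x \<in> V \<and> y \<in> V" using sg by (simp add: simple_graph_def)
lemma symE: "\<forall>x y. E x y \<longrightarrow> E y x" using sg by (simp add: simple_graph_def)
lemma finV: "finite V" using sg by (simp add: simple_graph_def)
lemma irrE: "\<not> E x x" using sg by (simp add: simple_graph_def)

lemma subtree_path:
  assumes "v \<in> V" "v \<notin> W u" "b1 \<in> I" "b2 \<in> I" "v \<in> W b1" "v \<in> W b2"
  shows "(restrict_adj (I - {u}) F)\<^sup>*\<^sup>* b1 b2"
proof -
  have "(restrict_adj {x\<in>I. v \<in> W x} F)\<^sup>*\<^sup>* b1 b2"
    using subconn[OF assms(1)] assms(3-6) by (auto simp: connected_on_def)
  moreover have "{x\<in>I. v \<in> W x} \<subseteq> I - {u}" using assms(2) by auto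
  ultimately show ?thesis using restrict_mono[of "{x\<in>I. v \<in> W x}" "I - {u}"] by blast
qed

lemma bag_step:
  assumes DV: "D \<subseteq> V" and Dne: "D \<noteq> {}" and Dc: "connected_on D E"
  shows "u \<in> I \<Longrightarrow> nbr D \<subseteq> W u \<Longrightarrow> \<exists>x\<in>D. \<exists>u'\<in>I. nbr D \<subseteq> W u' \<and> x \<in> W u'"
proof -
  obtain d0 where d0: "d0 \<in> D" using Dne by blast
  then have d0V: "d0 \<in> V" using DV by blast
  obtain a0 where a0: "a0 \<in> I" "d0 \<in> W a0" using cover[OF d0V] by blast
  show "u \<in> I \<Longrightarrow> nbr D \<subseteq> W u \<Longrightarrow> \<exists>x\<in>D. \<exists>u'\<in>I. nbr D \<subseteq> W u' \<and> x \<in> W u'"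
  proof (induction "card (compo (I - {u}) F a0)" arbitrary: u rule: less_induct)
    case less
    show ?case
    proof (cases "D \<inter> W u = {}")
      case False
      then show ?thesis using less.prems by blast
    next
      case True
      let ?K = "compo (I - {u}) F a0"
      have a0u: "a0 \<noteq> u" using True a0 d0 by blast
      have A: "\<forall>b\<in>I. d \<in> W b \<longrightarrow> b \<in> ?K" if "d \<in> D" for d
      proof -
        have "(restrict_adj D E)\<^sup>*\<^sup>* d0 d" using Dc d0 that by (auto simp: connected_on_def)
        then show ?thesis
        proof (induction rule: rtranclp_induct)
          case base
          show ?case
          proof (intro ballI impI)
            fix b assume "b \<in> I" "d0 \<in> W b"
            then have "(restrict_adj (I - {u}) F)\<^sup>*\<^sup>* a0 b"
              using subtree_path[OF d0V _ a0(1) _ a0(2)] True d0 by blast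
            then show "b \<in> ?K" using \<open>b \<in> I\<close> True d0 \<open>d0 \<in> W b\<close> by (auto simp: compo_def)
          qed
        next
          case (step d d')
          then have dd: "E d d'" "d \<in> D" "d' \<in> D" by (auto simp: restrict_adj_def)
          obtain b0 where b0: "b0 \<in> I" "d \<in> W b0" "d' \<in> W b0" using edge_bag[OF dd(1)] by blast
          have b0K: "b0 \<in> ?K" using step.IH b0 by blast
          show ?case
          proof (intro ballI impI)
            fix b assume "b \<in> I" "d' \<in> W b"
            have "d' \<in> V" "d' \<notin> W u" using dd DV True by auto
            then have "(restrict_adj (I - {u}) F)\<^sup>*\<^sup>* b0 b"
              using subtree_path[OF _ _ b0(1) \<open>b \<in> I\<close> b0(3) \<open>d' \<in> W b\<close>] by blast
            moreover have "(restrict_adj (I - {u}) F)\<^sup>*\<^sup>* a0 b0" using b0K by (simp add: compo_def)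
            ultimately have "(restrict_adj (I - {u}) F)\<^sup>*\<^sup>* a0 b" using rtranclp_trans by metis
            then show "b \<in> ?K" using \<open>b \<in> I\<close> \<open>d' \<notin> W u\<close> \<open>d' \<in> W b\<close>
              by (auto simp: compo_def)
          qed
        qed
      qed
      have "(restrict_adj I F)\<^sup>*\<^sup>* u a0" using connI less.prems(1) a0(1) by (auto simp: connected_on_def)
      from first_step[OF this a0u] obtain u'' where u'': "F u u''" "u'' \<in> I" "(restrict_adj (I - {u}) F)\<^sup>*\<^sup>* u'' a0"
        by blast
      have a0u'': "(restrict_adj (I - {u}) F)\<^sup>*\<^sup>* a0 u''" using rt_sym[OF symF] u''(3) by blast
      have u''u: "u'' \<noteq> u" using u''(1) sgI by (auto simp: simple_graph_def)
      have u''K: "u'' \<in> ?K" using a0u'' u''(2) u''u by (auto simp: compo_def)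
      have uniq: "y = u''" if "F u y" "(restrict_adj (I - {u}) F)\<^sup>*\<^sup>* y a0" for y
      proof (rule ccontr)
        assume "y \<noteq> u''"
        moreover have "(restrict_adj (I - {u}) F)\<^sup>*\<^sup>* y u''" using that(2) a0u'' by (rule rtranclp_trans)
        ultimately show False using no_two[OF tree that(1) u''(1)] by blast
      qed
      have N: "nbr D \<subseteq> W u''"
      proof
        fix v assume v: "v \<in> nbr D"
        then obtain d where d: "d \<in> D" "E d v" and vV: "v \<in> V" by (auto simp: nbr_def)
        obtain b where b: "b \<in> I" "d \<in> W b" "v \<in> W b" using edge_bag[OF d(2)] by blast
        have bK: "b \<in> ?K" using A[OF d(1)] b by blast
        have vu: "v \<in> W u" using v less.prems(2) by blast
        have "(restrict_adj {x\<in>I. v \<in> W x} F)\<^sup>*\<^sup>* u b"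
          using subconn[OF vV] vu b less.prems(1) by (auto simp: connected_on_def)
        moreover have "b \<noteq> u" using bK by (auto simp: compo_def)
        ultimately obtain y where y: "F u y" "y \<in> {x\<in>I. v \<in> W x}"
          "(restrict_adj ({x\<in>I. v \<in> W x} - {u}) F)\<^sup>*\<^sup>* y b"
          using first_step[where J="{x\<in>I. v \<in> W x}" and F=F and u=u and a=b] by blast
        have "(restrict_adj (I - {u}) F)\<^sup>*\<^sup>* y b"
          using restrict_mono[OF _ y(3), of "I - {u}"] by blast
        moreover have "(restrict_adj (I - {u}) F)\<^sup>*\<^sup>* b a0"
          using bK rt_sym[OF symF] by (auto simp: compo_def)
        ultimately have "(restrict_adj (I - {u}) F)\<^sup>*\<^sup>* y a0" by (rule rtranclp_trans)
        then have "y = u''" using uniq y(1) by blast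
        then show "v \<in> W u''" using y(2) by blast
      qed
      show ?thesis
      proof (cases "D \<inter> W u'' = {}")
        case False
        then show ?thesis using N u''(2) by blast
      next
        case True2: True
        let ?K2 = "compo (I - {u''}) F a0"
        have a0u2: "a0 \<noteq> u''" using True2 a0 d0 by blast
        have uK2: "u \<notin> ?K2"
        proof
          assume "u \<in> ?K2"
          then have "(restrict_adj (I - {u''}) F)\<^sup>*\<^sup>* a0 u" by (simp add: compo_def)
          then have "(restrict_adj (I - {u''}) F)\<^sup>*\<^sup>* u a0" using rt_sym[OF symF] by blast
          from first_step[OF this a0u] obtain y where y: "F u y" "y \<in> I - {u''}" "(restrict_adj (I - {u''} - {u}) F)\<^sup>*\<^sup>* y a0"
            by blast
          have "(restrict_adj (I - {u}) F)\<^sup>*\<^sup>* y a0" using restrict_mono[OF _ y(3), of "I - {u}"] by blast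
          then have "y = u''" using uniq y(1) by blast
          then show False using y(2) by blast
        qed
        have sub: "?K2 \<subseteq> ?K - {u''}"
        proof
          fix b assume b: "b \<in> ?K2"
          have "(restrict_adj ?K2 F)\<^sup>*\<^sup>* a0 b"
            using in_compo_path[where r=a0 and S="I - {u''}" and v=b and E=F] b a0(1) a0u2 by (auto simp: compo_def)
          moreover have "?K2 \<subseteq> I - {u}" using uK2 compo_sub[of "I - {u''}" F a0] by blast
          ultimately have "(restrict_adj (I - {u}) F)\<^sup>*\<^sup>* a0 b" using restrict_mono[of ?K2 "I - {u}"] by blast
          then show "b \<in> ?K - {u''}" using b uK2 by (auto simp: compo_def)
        qed
        have "finite ?K" using finI compo_sub[of "I - {u}" F a0] by (meson finite_Diff finite_subset)
        moreover have "?K2 \<subset> ?K" using sub u''K by blast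
        ultimately have "card ?K2 < card ?K" by (rule psubset_card_mono)
        then show ?thesis using less.hyps[of u''] u''(2) N by blast
      qed
    qed
  qed
qed

end



locale copgame = tdec V E I F W for V :: "'a set" and E and I :: "'b set" and F and W +
  fixes k :: nat
  assumes connV: "connected_on V E"
    and bagk: "\<forall>x\<in>I. card (W x) \<le> 2 * k"
    and k1: "k \<ge> 1"
begin

sublocale G: game V E k using finV by unfold_locales

abbreviation stp :: "'a \<Rightarrow> 'a \<Rightarrow> bool" where
  "stp \<equiv> step_ok (restrict_adj V E)"

lemma stp_iff: "stp a b \<longleftrightarrow> a = b \<or> E a b"
  using EV by (auto simp: step_ok_def restrict_adj_def)

definition reg :: "'a set \<Rightarrow> 'a set" where
  "reg D = D \<union> nbr D"

lemma nbrV: "nbr D \<subseteq> V" by (auto simp: nbr_def)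

lemma regV: "D \<subseteq> V \<Longrightarrow> reg D \<subseteq> V" using nbrV by (auto simp: reg_def)

lemma reg_mono: "D' \<subseteq> D \<Longrightarrow> reg D' \<subseteq> reg D"
  by (auto simp: reg_def nbr_def)

lemma robber_step: "r \<in> D \<Longrightarrow> stp r r' \<Longrightarrow> r' \<in> reg D"
  using EV by (auto simp: stp_iff reg_def nbr_def)

definition guard_ok :: "'a set \<Rightarrow> (nat \<Rightarrow> 'a) \<Rightarrow> nat \<Rightarrow> ('a \<Rightarrow> nat) \<Rightarrow> bool" where
  "guard_ok D q m f \<longleftrightarrow> (\<forall>j\<le>m. q j \<in> V) \<and> (\<forall>j<m. q j = q (Suc j) \<or> E (q j) (q (Suc j)))
     \<and> (\<forall>a\<in>D. \<forall>b\<in>reg D. E a b \<longrightarrow> f b \<le> Suc (f a) \<and> f a \<le> Suc (f b))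
     \<and> (\<forall>v\<in>reg D. f v \<le> m)"

definition fullc :: "'a set \<Rightarrow> 'a set \<Rightarrow> (nat \<Rightarrow> 'a) \<Rightarrow> nat \<Rightarrow> ('a \<Rightarrow> nat) \<Rightarrow> nat \<Rightarrow> 'a \<Rightarrow> 'a \<Rightarrow> bool" where
  "fullc D du q m f j ci r \<longleftrightarrow> guard_ok D q m f \<and> j \<le> m \<and> ci = q j \<and> f r \<le> Suc j \<and> j \<le> Suc (f r)
     \<and> (\<forall>z\<in>du. z = q (f z))"

definition postc :: "'a set \<Rightarrow> 'a set \<Rightarrow> (nat \<Rightarrow> 'a) \<Rightarrow> nat \<Rightarrow> ('a \<Rightarrow> nat) \<Rightarrow> 'a \<Rightarrow> 'a \<Rightarrow> bool" where
  "postc D du q m f ci r \<longleftrightarrow> guard_ok D q m f \<and> (\<forall>z\<in>du. z = q (f z)) \<and> ci = q (f r) \<and> f r \<le> m"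

definition upc :: "'a set \<Rightarrow> 'a \<Rightarrow> (nat \<Rightarrow> 'a) \<Rightarrow> nat \<Rightarrow> ('a \<Rightarrow> nat) \<Rightarrow> nat \<Rightarrow> 'a \<Rightarrow> 'a \<Rightarrow> bool" where
  "upc D z q m f j ci r \<longleftrightarrow> guard_ok D q m f \<and> j \<le> m \<and> ci = q j \<and> f r \<le> Suc j \<and> z = q m \<and> f z = m"

definition base :: "'a set \<Rightarrow> (nat \<Rightarrow> 'a set) \<Rightarrow> (nat \<Rightarrow> 'a) \<Rightarrow> 'a \<Rightarrow> bool" where
  "base D du c r \<longleftrightarrow> D \<subseteq> V \<and> connected_on D E \<and> r \<in> reg D \<and> (\<forall>i<k. c i \<in> V)
     \<and> (\<forall>i<k. du i \<subseteq> nbr D) \<and> (\<forall>i<k. \<forall>i'<k. i \<noteq> i' \<longrightarrow> du i \<inter> du i' = {})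
     \<and> nbr D \<subseteq> (\<Union>i<k. du i)"

definition fulls :: "'a set \<Rightarrow> (nat \<Rightarrow> 'a set) \<Rightarrow> (nat \<Rightarrow> 'a) \<Rightarrow> 'a \<Rightarrow> nat set \<Rightarrow> bool" where
  "fulls D du c r A \<longleftrightarrow> (\<forall>i<k. i \<notin> A \<longrightarrow> du i \<noteq> {} \<longrightarrow> (\<exists>q m f j. fullc D (du i) q m f j (c i) r))"

definition posts :: "'a set \<Rightarrow> (nat \<Rightarrow> 'a set) \<Rightarrow> (nat \<Rightarrow> 'a) \<Rightarrow> 'a \<Rightarrow> nat set \<Rightarrow> bool" where
  "posts D du c r A \<longleftrightarrow> (\<forall>i<k. i \<notin> A \<longrightarrow> du i \<noteq> {} \<longrightarrow> (\<exists>q m f. postc D (du i) q m f (c i) r))"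

definition steady :: "'a set \<Rightarrow> (nat \<Rightarrow> 'a set) \<Rightarrow> (nat \<Rightarrow> 'a) \<Rightarrow> 'a \<Rightarrow> bool" where
  "steady D du c r \<longleftrightarrow> base D du c r \<and> (\<exists>u\<in>I. nbr D \<subseteq> W u) \<and> fulls D du c r {}"

definition travel :: "'a \<Rightarrow> (nat \<Rightarrow> 'a) \<Rightarrow> nat \<Rightarrow> nat \<Rightarrow> 'a \<Rightarrow> bool" where
  "travel x p L j ci \<longleftrightarrow> j \<le> L \<and> ci = p j \<and> p L = x \<and> (\<forall>i\<le>L. p i \<in> V)
     \<and> (\<forall>i<L. p i = p (Suc i) \<or> E (p i) (p (Suc i)))"

definition Inv :: "nat \<Rightarrow> nat \<Rightarrow> nat \<Rightarrow> (nat \<Rightarrow> 'a) \<Rightarrow> 'a \<Rightarrow> bool" where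
  "Inv a b1 b2 c r \<longleftrightarrow> (\<exists>D du x act. a = card D \<and> base D du c r \<and> x \<in> D
     \<and> (\<exists>u\<in>I. nbr D \<union> {x} \<subseteq> W u) \<and> act < k \<and> fulls D du c r {act} \<and>
     ((du act = {} \<and> b1 = 1 \<and> (\<exists>p L j. travel x p L j (c act) \<and> b2 = L - j))
    \<or> (\<exists>z q m f j. du act = {z} \<and> b1 = 1 \<and> upc D z q m f j (c act) r \<and> b2 = m - j)
    \<or> (\<exists>z q m f j. du act = {z} \<and> b1 = 0 \<and> upc D z q m f j (c act) r \<and> q 0 = x \<and> f x = 0
        \<and> b2 = (if f r < j then (j - f r) * (m + 2) + j else 0))))"

lemma guard_path_step:
  assumes "guard_ok D q m f" "j \<le> m" "j' \<le> m" "j' \<le> Suc j" "j \<le> Suc j'"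
  shows "q j' \<in> V \<and> stp (q j) (q j')"
proof -
  have qV: "q j' \<in> V" using assms(1,3) by (simp add: guard_ok_def)
  consider "j' = j" | "j' = Suc j" | "j = Suc j'" using assms(4,5) by linarith
  then show ?thesis
  proof cases
    case 1 then show ?thesis using qV by (simp add: stp_iff)
  next
    case 2
    then have "q j = q j' \<or> E (q j) (q j')" using assms(1,3) by (simp add: guard_ok_def)
    then show ?thesis using qV by (simp add: stp_iff)
  next
    case 3
    then have "q j' = q j \<or> E (q j') (q j)" using assms(1,2) by (simp add: guard_ok_def)
    then show ?thesis using qV symE by (auto simp: stp_iff)
  qed
qed

lemma guard_mono: "guard_ok D q m f \<Longrightarrow> D' \<subseteq> D \<Longrightarrow> guard_ok D' q m f"
proof -
  assume g: "guard_ok D q m f" and s: "D' \<subseteq> D"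
  have "reg D' \<subseteq> reg D" using reg_mono[OF s] .
  then show ?thesis using g s unfolding guard_ok_def by blast
qed

lemma lip: "guard_ok D q m f \<Longrightarrow> r \<in> D \<Longrightarrow> stp r r' \<Longrightarrow> f r' \<le> Suc (f r) \<and> f r \<le> Suc (f r')"
proof -
  assume g: "guard_ok D q m f" and r: "r \<in> D" and s: "stp r r'"
  have r': "r' \<in> reg D" using robber_step[OF r s] .
  show ?thesis
  proof (cases "r' = r")
    case True then show ?thesis by simp
  next
    case False
    then have "E r r'" using s by (simp add: stp_iff)
    then show ?thesis using g r r' unfolding guard_ok_def by blast
  qed
qed

lemma post_full: "postc D du q m f ci r \<Longrightarrow> r \<in> D \<Longrightarrow> stp r r' \<Longrightarrow> fullc D du q m f (f r) ci r'"
proof -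
  assume p: "postc D du q m f ci r" and r: "r \<in> D" and s: "stp r r'"
  have "f r' \<le> Suc (f r) \<and> f r \<le> Suc (f r')" using lip[of D q m f r r'] r s p by (simp add: postc_def)
  then show ?thesis using p by (simp add: postc_def fullc_def)
qed

lemma posts_full: "posts D du c r A \<Longrightarrow> r \<in> D \<Longrightarrow> stp r r' \<Longrightarrow> fulls D du c r' A"
proof -
  assume p: "posts D du c r A" and r: "r \<in> D" and s: "stp r r'"
  show ?thesis unfolding fulls_def
  proof (intro allI impI)
    fix i assume "i < k" "i \<notin> A" "du i \<noteq> {}"
    then obtain q m f where "postc D (du i) q m f (c i) r" using p unfolding posts_def by blast
    from post_full[OF this r s] show "\<exists>q m f j. fullc D (du i) q m f j (c i) r'" by blast
  qed
qed

lemma posts_catch: "posts D du c r A \<Longrightarrow> i < k \<Longrightarrow> i \<notin> A \<Longrightarrow> r \<in> du i \<Longrightarrow> G.hit c r"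
proof -
  assume p: "posts D du c r A" and i: "i < k" "i \<notin> A" "r \<in> du i"
  then obtain q m f where "postc D (du i) q m f (c i) r" unfolding posts_def by blast
  then have "c i = r" using i(3) unfolding postc_def by metis
  then show ?thesis using i(1) unfolding G.hit_def by blast
qed

lemma others_move:
  assumes b: "base D du c r" and fu: "fulls D du c r A"
  shows "\<exists>c'. (\<forall>i<k. i \<notin> A \<longrightarrow> c' i \<in> V \<and> stp (c i) (c' i)) \<and> posts D du c' r A"
proof -
  define c' where "c' i = (if i \<notin> A \<and> du i \<noteq> {} then
     (SOME v. \<exists>q m f j. fullc D (du i) q m f j (c i) r \<and> v = q (f r)) else c i)" for i
  have rr: "r \<in> reg D" using b by (simp add: base_def)
  have busy: "\<exists>q m f j. fullc D (du i) q m f j (c i) r \<and> c' i = q (f r)"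
    if "i < k" "i \<notin> A" "du i \<noteq> {}" for i
  proof -
    have "\<exists>v. \<exists>q m f j. fullc D (du i) q m f j (c i) r \<and> v = q (f r)"
      using fu that unfolding fulls_def by blast
    from someI_ex[OF this] show ?thesis using that by (simp add: c'_def)
  qed
  have "\<forall>i<k. i \<notin> A \<longrightarrow> c' i \<in> V \<and> stp (c i) (c' i)"
  proof (intro allI impI)
    fix i assume i: "i < k" "i \<notin> A"
    show "c' i \<in> V \<and> stp (c i) (c' i)"
    proof (cases "du i = {}")
      case True
      then show ?thesis using b i by (simp add: c'_def base_def stp_iff)
    next
      case False
      then obtain q m f j where fc: "fullc D (du i) q m f j (c i) r" "c' i = q (f r)"
        using busy i by blast
      have "f r \<le> m" using fc(1) rr by (simp add: fullc_def guard_ok_def)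
      then show ?thesis using guard_path_step[of D q m f j "f r"] fc by (simp add: fullc_def)
    qed
  qed
  moreover have "posts D du c' r A"
    unfolding posts_def
  proof (intro allI impI)
    fix i assume i: "i < k" "i \<notin> A" "du i \<noteq> {}"
    then obtain q m f j where fc: "fullc D (du i) q m f j (c i) r" "c' i = q (f r)"
      using busy by blast
    have "f r \<le> m" using fc(1) rr by (simp add: fullc_def guard_ok_def)
    then show "\<exists>q m f. postc D (du i) q m f (c' i) r" using fc by (auto simp: fullc_def postc_def)
  qed
  ultimately show ?thesis by blast
qed

lemma InvI_travel:
  assumes "base D du c r" "x \<in> D" "u \<in> I" "nbr D \<union> {x} \<subseteq> W u" "act < k" "fulls D du c r {act}"
    "du act = {}" "travel x p L j (c act)"
  shows "Inv (card D) 1 (L - j) c r"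
  unfolding Inv_def
  apply (rule exI[of _ D], rule exI[of _ du], rule exI[of _ x], rule exI[of _ act])
  using assms by blast

lemma InvI_walk:
  assumes "base D du c r" "x \<in> D" "u \<in> I" "nbr D \<union> {x} \<subseteq> W u" "act < k" "fulls D du c r {act}"
    "du act = {z}" "upc D z q m f j (c act) r"
  shows "Inv (card D) 1 (m - j) c r"
  unfolding Inv_def
  apply (rule exI[of _ D], rule exI[of _ du], rule exI[of _ x], rule exI[of _ act])
  using assms by blast

lemma InvI_appr:
  assumes "base D du c r" "x \<in> D" "u \<in> I" "nbr D \<union> {x} \<subseteq> W u" "act < k" "fulls D du c r {act}"
    "du act = {z}" "upc D z q m f j (c act) r" "q 0 = x" "f x = 0"
  shows "Inv (card D) 0 (if f r < j then (j - f r) * (m + 2) + j else 0) c r"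
  unfolding Inv_def
  apply (rule exI[of _ D], rule exI[of _ du], rule exI[of _ x], rule exI[of _ act])
  apply (intro conjI)
  using assms by blast+

lemma count:
  assumes b: "base D du c r" and u: "u \<in> I" "nbr D \<union> {x} \<subseteq> W u" and x: "x \<in> D"
  shows "\<exists>i<k. du i = {} \<or> card (du i) = 1"
proof (rule ccontr)
  assume "\<not> ?thesis"
  then have ne: "\<forall>i<k. du i \<noteq> {} \<and> card (du i) \<noteq> 1" by blast
  have finN: "finite (nbr D)" using finV nbrV finite_subset by blast
  have sub: "\<forall>i<k. du i \<subseteq> nbr D" and dis: "\<forall>i<k. \<forall>i'<k. i \<noteq> i' \<longrightarrow> du i \<inter> du i' = {}"
    using b by (auto simp: base_def)
  have fin: "\<forall>i\<in>{..<k}. finite (du i)" using sub finN finite_subset by blast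
  have c2: "\<forall>i\<in>{..<k}. 2 \<le> card (du i)"
  proof
    fix i assume "i \<in> {..<k}"
    then have "du i \<noteq> {}" "card (du i) \<noteq> 1" "finite (du i)" using ne fin by auto
    then show "2 \<le> card (du i)" by (metis One_nat_def card_0_eq less_2_cases not_le)
  qed
  have "card (\<Union>i\<in>{..<k}. du i) = (\<Sum>i\<in>{..<k}. card (du i))"
    by (rule card_UN_disjoint) (use fin dis in auto)
  also have "\<dots> \<ge> (\<Sum>i\<in>{..<k}. 2)" using c2 by (intro sum_mono) auto
  finally have "2 * k \<le> card (\<Union>i\<in>{..<k}. du i)" by (simp add: mult.commute)
  also have "\<dots> \<le> card (nbr D)" using sub finN by (intro card_mono) auto
  finally have A: "2 * k \<le> card (nbr D)" .
  have xn: "x \<notin> nbr D" using x by (simp add: nbr_def)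
  have "card (nbr D \<union> {x}) \<le> card (W u)"
    using u finite_subset[OF WV[OF u(1)] finV] by (intro card_mono) auto
  moreover have "card (nbr D \<union> {x}) = Suc (card (nbr D))" using xn finN by simp
  ultimately show False using bagk u(1) A by fastforce
qed

lemma travel_path:
  assumes "a \<in> V" "b \<in> V"
  shows "\<exists>p L. travel b p L 0 a"
proof -
  have "(restrict_adj V E)\<^sup>*\<^sup>* a b" using connV assms by (simp add: connected_on_def)
  then obtain n where "((restrict_adj V E) ^^ n) a b" using rtranclp_imp_relpowp by metis
  then obtain p where p: "p 0 = a" "p n = b" "\<forall>i<n. restrict_adj V E (p i) (p (Suc i))"
    unfolding relpowp_fun_conv by blast
  have "\<forall>i\<le>n. p i \<in> V"
  proof (intro allI impI)
    fix i assume "i \<le> n"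
    then show "p i \<in> V"
    proof (cases "i = n")
      case True then show ?thesis using p(2) assms(2) by simp
    next
      case False then show ?thesis using p(3) \<open>i \<le> n\<close> by (auto simp: restrict_adj_def)
    qed
  qed
  then have "travel b p n 0 a" using p by (auto simp: travel_def restrict_adj_def)
  then show ?thesis by blast
qed

lemma to_up:
  assumes fc: "fullc D du Q M Fn J ci r" and z: "z \<in> du" "z \<in> reg D" and r: "r \<in> reg D"
  shows "\<exists>q m f j. upc D z q m f j ci r"
proof -
  have g: "guard_ok D Q M Fn" and J: "J \<le> M" "ci = Q J" "Fn r \<le> Suc J" "J \<le> Suc (Fn r)"
    and zq: "z = Q (Fn z)" using fc z by (auto simp: fullc_def)
  have range: "\<forall>v\<in>reg D. Fn v \<le> M" using g by (simp add: guard_ok_def)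
  define h where "h = Fn z"
  have hM: "h \<le> M" using range z by (simp add: h_def)
  show ?thesis
  proof (cases "J \<le> h")
    case True
    define f where "f v = min (Fn v) h" for v
    have "guard_ok D Q h f"
      unfolding guard_ok_def
    proof (intro conjI ballI impI allI)
      fix j assume "j \<le> h" then show "Q j \<in> V" using g hM by (simp add: guard_ok_def)
    next
      fix j assume "j < h" then show "Q j = Q (Suc j) \<or> E (Q j) (Q (Suc j))" using g hM by (simp add: guard_ok_def)
    next
      fix a b assume ab: "a \<in> D" "b \<in> reg D" "E a b"
      then have "Fn b \<le> Suc (Fn a) \<and> Fn a \<le> Suc (Fn b)" using g unfolding guard_ok_def by blast
      then show "f b \<le> Suc (f a)" "f a \<le> Suc (f b)" by (auto simp: f_def min_def)
    next
      fix v show "f v \<le> h" by (simp add: f_def)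
    qed
    moreover have "f r \<le> Suc J" using J by (simp add: f_def)
    moreover have "z = Q h" "f z = h" using zq by (auto simp: f_def h_def)
    ultimately have "upc D z Q h f J ci r" using True J by (simp add: upc_def)
    then show ?thesis by blast
  next
    case False
    define q where "q j = Q (M - j)" for j
    define f where "f v = M - max (Fn v) h" for v
    have g1: "\<forall>j\<le>M - h. q j \<in> V" using g by (simp add: guard_ok_def q_def)
    have g2: "\<forall>j<M - h. q j = q (Suc j) \<or> E (q j) (q (Suc j))"
    proof (intro allI impI)
      fix j assume j: "j < M - h"
      let ?i = "M - Suc j"
      have "?i < M" using j by simp
      then have "Q ?i = Q (Suc ?i) \<or> E (Q ?i) (Q (Suc ?i))" using g by (simp add: guard_ok_def)
      moreover have "Suc ?i = M - j" using j by simp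
      ultimately show "q j = q (Suc j) \<or> E (q j) (q (Suc j))" using symE by (auto simp: q_def)
    qed
    have g3: "\<forall>a\<in>D. \<forall>b\<in>reg D. E a b \<longrightarrow> f b \<le> Suc (f a) \<and> f a \<le> Suc (f b)"
    proof (intro ballI impI)
      fix a b assume ab: "a \<in> D" "b \<in> reg D" "E a b"
      have "a \<in> reg D" using ab(1) by (simp add: reg_def)
      then have "Fn a \<le> M" "Fn b \<le> M" using range ab by auto
      moreover have "Fn b \<le> Suc (Fn a) \<and> Fn a \<le> Suc (Fn b)" using g ab unfolding guard_ok_def by blast
      ultimately show "f b \<le> Suc (f a) \<and> f a \<le> Suc (f b)" using hM by (auto simp: f_def max_def)
    qed
    have g4: "\<forall>v\<in>reg D. f v \<le> M - h" by (auto simp: f_def)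
    have "guard_ok D q (M - h) f" using g1 g2 g3 g4 by (simp add: guard_ok_def)
    moreover have "M - J \<le> M - h" using False by simp
    moreover have "ci = q (M - J)" using J by (simp add: q_def)
    moreover have "f r \<le> Suc (M - J)" using J False by (auto simp: f_def max_def)
    moreover have "z = q (M - h)" using zq hM by (simp add: q_def h_def)
    moreover have "f z = M - h" by (simp add: f_def h_def)
    ultimately have "upc D z q (M - h) f (M - J) ci r" by (simp add: upc_def)
    then show ?thesis by blast
  qed
qed

lemma start:
  assumes st: "steady D du c r"
  shows "\<exists>b1 b2. Inv (card D) b1 b2 c r"
proof -
  have b: "base D du c r" and u0: "\<exists>u\<in>I. nbr D \<subseteq> W u" and fu: "fulls D du c r {}"
    using st by (auto simp: steady_def)
  have DV: "D \<subseteq> V" and Dc: "connected_on D E" and rr: "r \<in> reg D" and cV: "\<forall>i<k. c i \<in> V"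
    and sub: "\<forall>i<k. du i \<subseteq> nbr D"
    using b by (auto simp: base_def)
  have Dne: "D \<noteq> {}" using rr by (auto simp: reg_def nbr_def)
  obtain u where u: "u \<in> I" "nbr D \<subseteq> W u" using u0 by blast
  obtain x u' where x: "x \<in> D" "u' \<in> I" "nbr D \<subseteq> W u'" "x \<in> W u'"
    using bag_step[OF DV Dne Dc u] by blast
  have xu: "nbr D \<union> {x} \<subseteq> W u'" using x by blast
  obtain i where i: "i < k" "du i = {} \<or> card (du i) = 1" using count[OF b x(2) xu x(1)] by blast
  have fu': "fulls D du c r {i}" using fu by (simp add: fulls_def)
  show ?thesis
  proof (cases "du i = {}")
    case True
    obtain p L where "travel x p L 0 (c i)" using travel_path[of "c i" x] cV i(1) x(1) DV by blast
    then have "Inv (card D) 1 (L - 0) c r"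
      using InvI_travel[OF b x(1) x(2) xu i(1) fu' True] by blast
    then show ?thesis by blast
  next
    case False
    then obtain z where z: "du i = {z}" using i(2) by (metis card_1_singletonE)
    then obtain Q M Fn J where "fullc D (du i) Q M Fn J (c i) r" using fu i(1) by (auto simp: fulls_def)
    moreover have "z \<in> reg D" using sub i(1) z by (auto simp: reg_def)
    ultimately obtain q m f j where "upc D z q m f j (c i) r" using to_up[of D "du i"] z rr by blast
    then have "Inv (card D) 1 (m - j) c r"
      using InvI_walk[OF b x(1) x(2) xu i(1) fu' z] by blast
    then show ?thesis by blast
  qed
qed

lemma lexl_iff: "G.lexl (a', b1', b2') (a, b1, b2) \<longleftrightarrow> a' < a \<or> (a' = a \<and> (b1' < b1 \<or> (b1' = b1 \<and> b2' < b2)))"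
  by (simp add: G.lexl_def)

lemma base_upd: "base D du c r \<Longrightarrow> \<forall>i<k. c' i \<in> V \<Longrightarrow> r' \<in> reg D \<Longrightarrow> base D du c' r'"
  by (simp add: base_def)

lemma posts_upd: "posts D du c r A \<Longrightarrow> a \<in> A \<Longrightarrow> posts D du (c(a := v)) r A"
  by (simp add: posts_def)

lemma posts_add: "posts D du c r {act} \<Longrightarrow> postc D dA q m f (c act) r \<Longrightarrow> posts D (du(act := dA)) c r {}"
  unfolding posts_def by auto

lemma nbr_cover: "base D du c r \<Longrightarrow> v \<in> nbr D \<Longrightarrow> \<exists>i<k. v \<in> du i"
  by (auto simp: base_def)

lemma r_cases: "base D du c r \<Longrightarrow> r \<in> D \<or> r \<in> nbr D"
  by (auto simp: base_def reg_def)

lemma completion: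
  assumes b: "base D du c r" and x: "x \<in> D" and u: "u \<in> I" "nbr D \<union> {x} \<subseteq> W u" and act: "act < k"
    and rD: "r \<in> D" "r \<noteq> x"
    and ps: "posts D (du(act := du act \<union> {x})) c' r {}"
    and cV: "\<forall>i<k. c' i \<in> V"
    and s: "stp r r'"
  shows "\<exists>a' b1 b2. a' < card D \<and> Inv a' b1 b2 c' r'"
proof -
  have DV: "D \<subseteq> V" and dis: "\<forall>i<k. \<forall>i'<k. i \<noteq> i' \<longrightarrow> du i \<inter> du i' = {}"
    and sub: "\<forall>i<k. du i \<subseteq> nbr D"
    using b by (auto simp: base_def)
  define D' where "D' = compo (D - {x}) E r"
  have rD': "r \<in> D'" using rD by (simp add: D'_def r_in_compo)
  have D'sub: "D' \<subseteq> D - {x}" unfolding D'_def by (rule compo_sub)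
  have conn: "connected_on D' E" unfolding D'_def using compo_conn[OF symE] rD by simp
  have nbrD': "nbr D' \<subseteq> nbr D \<union> {x}"
  proof
    fix v assume v: "v \<in> nbr D'"
    then obtain d where d: "d \<in> D'" "E d v" and vV: "v \<in> V" and vn: "v \<notin> D'" by (auto simp: nbr_def)
    show "v \<in> nbr D \<union> {x}"
    proof (rule ccontr)
      assume "v \<notin> nbr D \<union> {x}"
      then have vD: "v \<in> D - {x}" using d D'sub vV by (auto simp: nbr_def)
      have "(restrict_adj (D - {x}) E)\<^sup>*\<^sup>* r d" using d(1) by (simp add: D'_def compo_def)
      moreover have "restrict_adj (D - {x}) E d v" using d D'sub vD by (auto simp: restrict_adj_def)
      ultimately have "(restrict_adj (D - {x}) E)\<^sup>*\<^sup>* r v" by (rule rtranclp.rtrancl_into_rtrancl)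
      then have "v \<in> D'" using vD by (simp add: D'_def compo_def)
      then show False using vn by simp
    qed
  qed
  have r': "r' \<in> reg D'"
  proof (cases "r' = r")
    case True then show ?thesis using rD' by (simp add: reg_def)
  next
    case False
    then have "E r r'" using s by (simp add: stp_iff)
    then show ?thesis using rD' EV by (auto simp: reg_def nbr_def)
  qed
  define du2 where "du2 = du(act := du act \<union> {x})"
  define du' where "du' i = du2 i \<inter> nbr D'" for i
  have xdu: "\<forall>i<k. x \<notin> du i" using sub x by (auto simp: nbr_def)
  have "base D' du' c' r'"
    unfolding base_def
  proof (intro conjI allI impI)
    show "D' \<subseteq> V" using D'sub DV by blast
    show "connected_on D' E" by (rule conn)
    show "r' \<in> reg D'" by (rule r')
  next
    fix i assume "i < k" then show "c' i \<in> V" using cV by blast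
  next
    fix i assume "i < k" then show "du' i \<subseteq> nbr D'" by (simp add: du'_def)
  next
    fix i i' assume "i < k" "i' < k" "i \<noteq> i'"
    then have "du i \<inter> du i' = {}" "x \<notin> du i" "x \<notin> du i'" using dis xdu by auto
    then show "du' i \<inter> du' i' = {}" using \<open>i \<noteq> i'\<close> by (auto simp: du'_def du2_def)
  next
    show "nbr D' \<subseteq> (\<Union>i<k. du' i)"
    proof
      fix v assume v: "v \<in> nbr D'"
      then consider "v \<in> nbr D" | "v = x" using nbrD' by blast
      then show "v \<in> (\<Union>i<k. du' i)"
      proof cases
        case 1
        then obtain i where "i < k" "v \<in> du i" using nbr_cover[OF b] by blast
        then show ?thesis using v by (auto simp: du'_def du2_def)
      next
        case 2
        then show ?thesis using v act by (auto simp: du'_def du2_def)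
      qed
    qed
  qed
  moreover have "\<exists>u\<in>I. nbr D' \<subseteq> W u" using u nbrD' by blast
  moreover have "fulls D' du' c' r' {}"
    unfolding fulls_def
  proof (intro allI impI)
    fix i assume i: "i < k" "i \<notin> {}" "du' i \<noteq> {}"
    then have "du2 i \<noteq> {}" by (auto simp: du'_def)
    then obtain q m f where pc: "postc D (du2 i) q m f (c' i) r" using ps i(1) unfolding posts_def du2_def by blast
    have "fullc D (du2 i) q m f (f r) (c' i) r'" using post_full[OF pc rD(1) s] .
    then have "fullc D' (du' i) q m f (f r) (c' i) r'"
      using guard_mono[of D q m f D'] D'sub by (auto simp: fullc_def du'_def)
    then show "\<exists>q m f j. fullc D' (du' i) q m f j (c' i) r'" by blast
  qed
  ultimately have "steady D' du' c' r'" by (simp add: steady_def)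
  then obtain b1 b2 where "Inv (card D') b1 b2 c' r'" using start by blast
  moreover have "card D' < card D"
  proof -
    have "finite D" using DV finV finite_subset by blast
    moreover have "D' \<subset> D" using D'sub x by blast
    ultimately show ?thesis by (rule psubset_card_mono)
  qed
  ultimately show ?thesis by blast
qed

end



context copgame
begin

lemma lift_a:
  assumes "\<forall>r'. stp r r' \<longrightarrow> (\<exists>a' b1 b2. a' < a \<and> Inv a' b1 b2 c' r')"
  shows "\<forall>r'. stp r r' \<longrightarrow> G.hit c' r' \<or> (\<exists>a' b1' b2'. G.lexl (a', b1', b2') (a, b1, b2) \<and> Inv a' b1' b2' c' r')"
proof (intro allI impI)
  fix r' assume "stp r r'"
  then obtain a' b1' b2' where "a' < a" "Inv a' b1' b2' c' r'" using assms by blast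
  moreover have "G.lexl (a', b1', b2') (a, b1, b2)" using \<open>a' < a\<close> by (simp add: lexl_iff)
  ultimately show "G.hit c' r' \<or> (\<exists>a' b1' b2'. G.lexl (a', b1', b2') (a, b1, b2) \<and> Inv a' b1' b2' c' r')" by blast
qed

lemma lift_b2:
  assumes "\<forall>r'. stp r r' \<longrightarrow> (\<exists>b2'. b2' < b2 \<and> Inv a b1 b2' c' r')"
  shows "\<forall>r'. stp r r' \<longrightarrow> G.hit c' r' \<or> (\<exists>a' b1' b2'. G.lexl (a', b1', b2') (a, b1, b2) \<and> Inv a' b1' b2' c' r')"
proof (intro allI impI)
  fix r' assume "stp r r'"
  then obtain b2' where "b2' < b2" "Inv a b1 b2' c' r'" using assms by blast
  moreover have "G.lexl (a, b1, b2') (a, b1, b2)" using \<open>b2' < b2\<close> by (simp add: lexl_iff)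
  ultimately show "G.hit c' r' \<or> (\<exists>a' b1' b2'. G.lexl (a', b1', b2') (a, b1, b2) \<and> Inv a' b1' b2' c' r')" by blast
qed

lemma step_travel:
  assumes b: "base D du c r" and x: "x \<in> D" and u: "u \<in> I" "nbr D \<union> {x} \<subseteq> W u" and act: "act < k"
    and fu: "fulls D du c r {act}" and da: "du act = {}" and tr: "travel x p L j (c act)"
  shows "\<exists>c'. G.cmove c c' \<and> (G.hit c' r \<or> (\<forall>r'. stp r r' \<longrightarrow> G.hit c' r' \<or>
     (\<exists>a' b1' b2'. G.lexl (a', b1', b2') (card D, 1, L - j) \<and> Inv a' b1' b2' c' r')))"
proof -
  obtain c1 where c1: "\<forall>i<k. i \<notin> {act} \<longrightarrow> c1 i \<in> V \<and> stp (c i) (c1 i)" and ps1: "posts D du c1 r {act}"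
    using others_move[OF b fu] by blast
  have trv: "j \<le> L" "c act = p j" "p L = x" "\<forall>i\<le>L. p i \<in> V" "\<forall>i<L. p i = p (Suc i) \<or> E (p i) (p (Suc i))"
    using tr by (auto simp: travel_def)
  define j' where "j' = (if j < L then Suc j else j)"
  define c' where "c' = c1(act := p j')"
  have j'L: "j' \<le> L" using trv(1) by (simp add: j'_def)
  have cm: "G.cmove c c'"
    unfolding G.cmove_def
  proof (intro allI impI)
    fix i assume i: "i < k"
    show "c' i \<in> V \<and> stp (c i) (c' i)"
    proof (cases "i = act")
      case True
      have "p j' \<in> V" using trv(4) j'L by blast
      moreover have "stp (p j) (p j')" using trv(5) by (auto simp: j'_def stp_iff)
      ultimately show ?thesis using True trv(2) by (simp add: c'_def)
    next
      case False then show ?thesis using c1 i by (simp add: c'_def)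
    qed
  qed
  have cV: "\<forall>i<k. c' i \<in> V" using cm by (simp add: G.cmove_def)
  have ps: "posts D du c' r {act}" unfolding c'_def by (rule posts_upd[OF ps1]) simp
  consider "r \<in> nbr D" | "r \<in> D" using r_cases[OF b] by blast
  then show ?thesis
  proof cases
    case 1
    then obtain i where i: "i < k" "r \<in> du i" using nbr_cover[OF b] by blast
    then have "i \<noteq> act" using da by auto
    then have "G.hit c' r" using posts_catch[OF ps i(1) _ i(2)] by simp
    then show ?thesis using cm by blast
  next
    case 2
    show ?thesis
    proof (cases "j < L")
      case True
      have "\<forall>r'. stp r r' \<longrightarrow> Inv (card D) 1 (L - Suc j) c' r'"
      proof (intro allI impI)
        fix r' assume s: "stp r r'"
        have b': "base D du c' r'" using base_upd[OF b cV robber_step[OF 2 s]] .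
        have fu': "fulls D du c' r' {act}" using posts_full[OF ps 2 s] .
        have "travel x p L (Suc j) (c' act)" using trv True by (simp add: travel_def c'_def j'_def)
        from InvI_travel[OF b' x u act fu' da this] show "Inv (card D) 1 (L - Suc j) c' r'" .
      qed
      moreover have "G.lexl (card D, 1, L - Suc j) (card D, 1, L - j)" using True by (simp add: lexl_iff)
      ultimately show ?thesis using cm by blast
    next
      case False
      then have jL: "j = L" using trv(1) by simp
      have ca: "c' act = x" using jL trv(3) by (simp add: c'_def j'_def)
      show ?thesis
      proof (cases "r = x")
        case True
        then have "G.hit c' r" using ca act unfolding G.hit_def by blast
        then show ?thesis using cm by blast
      next
        case False
        have xV: "x \<in> V" using trv(3,4) by auto
        have "postc D (du act \<union> {x}) (\<lambda>_. x) 0 (\<lambda>_. 0) (c' act) r"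
          using ca xV da by (simp add: postc_def guard_ok_def)
        from posts_add[OF ps this] have ps2: "posts D (du(act := du act \<union> {x})) c' r {}" .
        have "\<forall>r'. stp r r' \<longrightarrow> (\<exists>a' b1 b2. a' < card D \<and> Inv a' b1 b2 c' r')"
          using completion[OF b x u act 2 False ps2 cV] by blast
        from lift_a[OF this] show ?thesis using cm by blast
      qed
    qed
  qed
qed

lemma step_appr:
  assumes b: "base D du c r" and x: "x \<in> D" and u: "u \<in> I" "nbr D \<union> {x} \<subseteq> W u" and act: "act < k"
    and fu: "fulls D du c r {act}" and da: "du act = {z}" and up: "upc D z q m f j (c act) r"
    and q0: "q 0 = x" and fx: "f x = 0"
  shows "\<exists>c'. G.cmove c c' \<and> (G.hit c' r \<or> (\<forall>r'. stp r r' \<longrightarrow> G.hit c' r' \<or>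
     (\<exists>a' b1' b2'. G.lexl (a', b1', b2') (card D, 0, if f r < j then (j - f r) * (m + 2) + j else 0)
        \<and> Inv a' b1' b2' c' r')))"
proof -
  obtain c1 where c1: "\<forall>i<k. i \<notin> {act} \<longrightarrow> c1 i \<in> V \<and> stp (c i) (c1 i)" and ps1: "posts D du c1 r {act}"
    using others_move[OF b fu] by blast
  have g: "guard_ok D q m f" and jm: "j \<le> m" and ca: "c act = q j" and frj: "f r \<le> Suc j"
    and zq: "z = q m" and fz: "f z = m"
    using up by (auto simp: upc_def)
  have rr: "r \<in> reg D" using b by (simp add: base_def)
  have frm: "f r \<le> m" using g rr by (simp add: guard_ok_def)
  define j' where "j' = max (j - 1) (f r)"
  define c' where "c' = c1(act := q j')"
  have j'm: "j' \<le> m" using jm frm by (simp add: j'_def)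
  have cm: "G.cmove c c'"
    unfolding G.cmove_def
  proof (intro allI impI)
    fix i assume i: "i < k"
    show "c' i \<in> V \<and> stp (c i) (c' i)"
    proof (cases "i = act")
      case True
      have "q j' \<in> V \<and> stp (q j) (q j')"
        by (rule guard_path_step[OF g jm j'm]) (use frj in \<open>auto simp: j'_def\<close>)
      then show ?thesis using True ca by (simp add: c'_def)
    next
      case False then show ?thesis using c1 i by (simp add: c'_def)
    qed
  qed
  have cV: "\<forall>i<k. c' i \<in> V" using cm by (simp add: G.cmove_def)
  have ps: "posts D du c' r {act}" unfolding c'_def by (rule posts_upd[OF ps1]) simp
  have ca': "c' act = q j'" by (simp add: c'_def)
  consider "r \<in> nbr D" | "r \<in> D" using r_cases[OF b] by blast
  then show ?thesis
  proof cases
    case 1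
    then obtain i where i: "i < k" "r \<in> du i" using nbr_cover[OF b] by blast
    show ?thesis
    proof (cases "i = act")
      case False
      then have "G.hit c' r" using posts_catch[OF ps i(1) _ i(2)] by simp
      then show ?thesis using cm by blast
    next
      case True
      then have "r = z" using i da by simp
      then have "j' = m" using fz jm by (simp add: j'_def)
      then have "c' act = r" using ca' zq \<open>r = z\<close> by simp
      then have "G.hit c' r" using act unfolding G.hit_def by blast
      then show ?thesis using cm by blast
    qed
  next
    case 2
    show ?thesis
    proof (cases "f r < j")
      case True
      have j'v: "j' = j - 1" using True by (simp add: j'_def)
      have "\<forall>r'. stp r r' \<longrightarrow> (\<exists>b2'. b2' < (j - f r) * (m + 2) + j \<and> Inv (card D) 0 b2' c' r')"
      proof (intro allI impI)
        fix r' assume s: "stp r r'"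
        have lp: "f r' \<le> Suc (f r) \<and> f r \<le> Suc (f r')" using lip[OF g 2 s] .
        have b': "base D du c' r'" using base_upd[OF b cV robber_step[OF 2 s]] .
        have fu': "fulls D du c' r' {act}" using posts_full[OF ps 2 s] .
        have "upc D z q m f (j - 1) (c' act) r'"
          using g jm zq fz ca' j'v lp True by (auto simp: upc_def)
        from InvI_appr[OF b' x u act fu' da this q0 fx]
        have I: "Inv (card D) 0 (if f r' < j - 1 then (j - 1 - f r') * (m + 2) + (j - 1) else 0) c' r'" .
        have lt: "(if f r' < j - 1 then (j - 1 - f r') * (m + 2) + (j - 1) else 0) < (j - f r) * (m + 2) + j"
        proof (cases "f r' < j - 1")
          case True
          have "j - 1 - f r' \<le> j - f r" using lp by linarith
          then have m1: "(j - 1 - f r') * (m + 2) \<le> (j - f r) * (m + 2)" by (rule mult_le_mono1)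
          have eq: "(if f r' < j - 1 then (j - 1 - f r') * (m + 2) + (j - 1) else 0) = (j - 1 - f r') * (m + 2) + (j - 1)"
            using True by simp
          have "1 \<le> j" using \<open>f r < j\<close> by simp
          then show ?thesis unfolding eq using m1 by linarith
        next
          case False
          have "0 < j - f r" using \<open>f r < j\<close> by simp
          then show ?thesis using False by simp
        qed
        show "\<exists>b2'. b2' < (j - f r) * (m + 2) + j \<and> Inv (card D) 0 b2' c' r'"
          using I lt by blast
      qed
      then have "\<forall>r'. stp r r' \<longrightarrow> (\<exists>b2'. b2' < (if f r < j then (j - f r) * (m + 2) + j else 0) \<and> Inv (card D) 0 b2' c' r')"
        using True by simp
      from lift_b2[OF this] show ?thesis using cm by blast
    next
      case False
      have j'v: "j' = f r" using False by (simp add: j'_def)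
      show ?thesis
      proof (cases "r = x")
        case True
        then have "c' act = r" using ca' j'v fx q0 by simp
        then have "G.hit c' r" using act unfolding G.hit_def by blast
        then show ?thesis using cm by blast
      next
        case rx: False
        have "postc D (du act \<union> {x}) q m f (c' act) r"
          using g da zq fz q0 fx ca' j'v frm by (auto simp: postc_def)
        from posts_add[OF ps this] have ps2: "posts D (du(act := du act \<union> {x})) c' r {}" .
        have "\<forall>r'. stp r r' \<longrightarrow> (\<exists>a' b1 b2. a' < card D \<and> Inv a' b1 b2 c' r')"
          using completion[OF b x u act 2 rx ps2 cV] by blast
        from lift_a[OF this] show ?thesis using cm by blast
      qed
    qed
  qed
qed

lemma appr_data:
  assumes b: "base D du c r" and x: "x \<in> D" and z: "z \<in> nbr D"
  shows "\<exists>q m f. upc D z q m f m z r \<and> q 0 = x \<and> f x = 0"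
proof -
  have DV: "D \<subseteq> V" and Dc: "connected_on D E" using b by (auto simp: base_def)
  let ?R = "restrict_adj (reg D) E"
  obtain d where d: "d \<in> D" "E d z" using z by (auto simp: nbr_def)
  have "(restrict_adj D E)\<^sup>*\<^sup>* x d" using Dc x d(1) by (simp add: connected_on_def)
  then have "?R\<^sup>*\<^sup>* x d" using restrict_mono[of D "reg D"] by (auto simp: reg_def)
  moreover have "?R d z" using d z by (auto simp: restrict_adj_def reg_def)
  ultimately have "?R\<^sup>*\<^sup>* x z" by (rule rtranclp.rtrancl_into_rtrancl)
  then have ex: "\<exists>n. (?R ^^ n) x z" using rtranclp_imp_relpowp by metis
  define m where "m = (LEAST n. (?R ^^ n) x z)"
  have pm: "(?R ^^ m) x z" unfolding m_def using LeastI_ex[OF ex] .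
  then obtain q where q: "q 0 = x" "q m = z" "\<forall>i<m. ?R (q i) (q (Suc i))"
    unfolding relpowp_fun_conv by blast
  define f where "f v = (LEAST n. n = m \<or> (?R ^^ n) x v)" for v
  have fle: "f v \<le> m" for v unfolding f_def by (rule Least_le) simp
  have fcase: "f v = m \<or> (?R ^^ f v) x v" for v
    unfolding f_def by (rule LeastI[of _ m]) simp
  have fstep: "f b \<le> Suc (f a)" if "?R a b" for a b
  proof (cases "f a = m")
    case True then show ?thesis using fle[of b] by simp
  next
    case False
    then have "(?R ^^ f a) x a" using fcase[of a] by simp
    then have "(?R ^^ Suc (f a)) x b" using that by (rule relpowp_Suc_I)
    then have "Suc (f a) = m \<or> (?R ^^ Suc (f a)) x b" by (rule disjI2)
    then show ?thesis unfolding f_def[of b] by (rule Least_le)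
  qed
  have regV: "reg D \<subseteq> V" using regV[OF DV] .
  have g: "guard_ok D q m f"
    unfolding guard_ok_def
  proof (intro conjI allI impI ballI)
    fix j assume j: "j \<le> m"
    show "q j \<in> V"
    proof (cases "j = m")
      case True then show ?thesis using q(2) z nbrV by auto
    next
      case False then have "?R (q j) (q (Suc j))" using q(3) j by simp
      then show ?thesis using regV by (auto simp: restrict_adj_def)
    qed
  next
    fix j assume "j < m"
    then have "?R (q j) (q (Suc j))" using q(3) by simp
    then show "q j = q (Suc j) \<or> E (q j) (q (Suc j))" by (simp add: restrict_adj_def)
  next
    fix a b assume ab: "a \<in> D" "b \<in> reg D" "E a b"
    then have "?R a b" "?R b a" using symE by (auto simp: restrict_adj_def reg_def)
    then show "f b \<le> Suc (f a)" "f a \<le> Suc (f b)" using fstep by auto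
  next
    fix v show "f v \<le> m" by (rule fle)
  qed
  have fz: "f z = m"
  proof (rule ccontr)
    assume "f z \<noteq> m"
    then have "(?R ^^ f z) x z" "f z < m" using fcase[of z] fle[of z] by auto
    moreover have "m \<le> f z" unfolding m_def using calculation(1) by (rule Least_le)
    ultimately show False by simp
  qed
  have fx: "f x = 0" unfolding f_def by (rule Least_eq_0) simp
  have "f r \<le> Suc m" using fle[of r] by simp
  then have "upc D z q m f m z r" using g fz q by (simp add: upc_def)
  then show ?thesis using q(1) fx by blast
qed

lemma step_walk:
  assumes b: "base D du c r" and x: "x \<in> D" and u: "u \<in> I" "nbr D \<union> {x} \<subseteq> W u" and act: "act < k"
    and fu: "fulls D du c r {act}" and da: "du act = {z}" and up: "upc D z q m f j (c act) r"
  shows "\<exists>c'. G.cmove c c' \<and> (G.hit c' r \<or> (\<forall>r'. stp r r' \<longrightarrow> G.hit c' r' \<or>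
     (\<exists>a' b1' b2'. G.lexl (a', b1', b2') (card D, 1, m - j) \<and> Inv a' b1' b2' c' r')))"
proof -
  have g: "guard_ok D q m f" and jm: "j \<le> m" and ca: "c act = q j" and frj: "f r \<le> Suc j"
    and zq: "z = q m" and fz: "f z = m"
    using up by (auto simp: upc_def)
  have zn: "z \<in> nbr D" using b da act by (auto simp: base_def)
  show ?thesis
  proof (cases "j < m")
    case True
    obtain c1 where c1: "\<forall>i<k. i \<notin> {act} \<longrightarrow> c1 i \<in> V \<and> stp (c i) (c1 i)" and ps1: "posts D du c1 r {act}"
      using others_move[OF b fu] by blast
    define c' where "c' = c1(act := q (Suc j))"
    have cm: "G.cmove c c'"
      unfolding G.cmove_def
    proof (intro allI impI)
      fix i assume i: "i < k"
      show "c' i \<in> V \<and> stp (c i) (c' i)"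
      proof (cases "i = act")
        case True
        have "q (Suc j) \<in> V \<and> stp (q j) (q (Suc j))"
          by (rule guard_path_step[OF g jm]) (use \<open>j < m\<close> in auto)
        then show ?thesis using True ca by (simp add: c'_def)
      next
        case False then show ?thesis using c1 i by (simp add: c'_def)
      qed
    qed
    have cV: "\<forall>i<k. c' i \<in> V" using cm by (simp add: G.cmove_def)
    have ps: "posts D du c' r {act}" unfolding c'_def by (rule posts_upd[OF ps1]) simp
    have ca': "c' act = q (Suc j)" by (simp add: c'_def)
    consider "r \<in> nbr D" | "r \<in> D" using r_cases[OF b] by blast
    then show ?thesis
    proof cases
      case 1
      then obtain i where i: "i < k" "r \<in> du i" using nbr_cover[OF b] by blast
      show ?thesis
      proof (cases "i = act")
        case False
        then have "G.hit c' r" using posts_catch[OF ps i(1) _ i(2)] by simp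
        then show ?thesis using cm by blast
      next
        case True
        then have "r = z" using i da by simp
        then have "Suc j = m" using fz frj \<open>j < m\<close> by simp
        then have "c' act = r" using ca' zq \<open>r = z\<close> by simp
        then have "G.hit c' r" using act unfolding G.hit_def by blast
        then show ?thesis using cm by blast
      qed
    next
      case 2
      have "\<forall>r'. stp r r' \<longrightarrow> (\<exists>b2'. b2' < m - j \<and> Inv (card D) 1 b2' c' r')"
      proof (intro allI impI)
        fix r' assume s: "stp r r'"
        have lp: "f r' \<le> Suc (f r) \<and> f r \<le> Suc (f r')" using lip[OF g 2 s] .
        have b': "base D du c' r'" using base_upd[OF b cV robber_step[OF 2 s]] .
        have fu': "fulls D du c' r' {act}" using posts_full[OF ps 2 s] .
        have "upc D z q m f (Suc j) (c' act) r'"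
          using g \<open>j < m\<close> zq fz ca' lp frj by (auto simp: upc_def)
        from InvI_walk[OF b' x u act fu' da this]
        have "Inv (card D) 1 (m - Suc j) c' r'" .
        moreover have "m - Suc j < m - j" using \<open>j < m\<close> by simp
        ultimately show "\<exists>b2'. b2' < m - j \<and> Inv (card D) 1 b2' c' r'" by blast
      qed
      from lift_b2[OF this] show ?thesis using cm by blast
    qed
  next
    case False
    then have "j = m" using jm by simp
    then have caz: "c act = z" using ca zq by simp
    obtain q' m' f' where qd: "upc D z q' m' f' m' z r" "q' 0 = x" "f' x = 0"
      using appr_data[OF b x zn] by blast
    then have "upc D z q' m' f' m' (c act) r" using caz by simp
    from step_appr[OF b x u act fu da this qd(2,3)]
    obtain c' where cm: "G.cmove c c'" and alt: "G.hit c' r \<or> (\<forall>r'. stp r r' \<longrightarrow> G.hit c' r' \<or>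
     (\<exists>a' b1' b2'. G.lexl (a', b1', b2') (card D, 0, if f' r < m' then (m' - f' r) * (m' + 2) + m' else 0)
        \<and> Inv a' b1' b2' c' r'))" by blast
    have conv: "G.lexl t (card D, 1, m - j)" if "G.lexl t (card D, 0, B)" for t B
      using that by (cases t) (auto simp: lexl_iff)
    show ?thesis using cm alt conv by blast
  qed
qed

lemma inv_step:
  assumes "Inv a b1 b2 c r"
  shows "\<exists>c'. G.cmove c c' \<and> (G.hit c' r \<or> (\<forall>r'. stp r r' \<longrightarrow> G.hit c' r' \<or>
     (\<exists>a' b1' b2'. G.lexl (a', b1', b2') (a, b1, b2) \<and> Inv a' b1' b2' c' r')))"
proof -
  from assms[unfolded Inv_def] obtain D du x act where H: "a = card D \<and> base D du c r \<and> x \<in> D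
     \<and> (\<exists>u\<in>I. nbr D \<union> {x} \<subseteq> W u) \<and> act < k \<and> fulls D du c r {act} \<and>
     ((du act = {} \<and> b1 = 1 \<and> (\<exists>p L j. travel x p L j (c act) \<and> b2 = L - j))
    \<or> (\<exists>z q m f j. du act = {z} \<and> b1 = 1 \<and> upc D z q m f j (c act) r \<and> b2 = m - j)
    \<or> (\<exists>z q m f j. du act = {z} \<and> b1 = 0 \<and> upc D z q m f j (c act) r \<and> q 0 = x \<and> f x = 0
        \<and> b2 = (if f r < j then (j - f r) * (m + 2) + j else 0)))"
    by (elim exE) (erule that)
  then have a: "a = card D" and b: "base D du c r" and x: "x \<in> D"
    and u0: "\<exists>u\<in>I. nbr D \<union> {x} \<subseteq> W u" and act: "act < k" and fu: "fulls D du c r {act}"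
    and cases: "(du act = {} \<and> b1 = 1 \<and> (\<exists>p L j. travel x p L j (c act) \<and> b2 = L - j))
    \<or> (\<exists>z q m f j. du act = {z} \<and> b1 = 1 \<and> upc D z q m f j (c act) r \<and> b2 = m - j)
    \<or> (\<exists>z q m f j. du act = {z} \<and> b1 = 0 \<and> upc D z q m f j (c act) r \<and> q 0 = x \<and> f x = 0
        \<and> b2 = (if f r < j then (j - f r) * (m + 2) + j else 0))"
    by (simp_all only:)
  obtain u where u: "u \<in> I" "nbr D \<union> {x} \<subseteq> W u" using u0 by blast
  from cases show ?thesis
  proof (elim disjE exE conjE)
    fix p L j assume h: "du act = {}" "b1 = 1" "travel x p L j (c act)" "b2 = L - j"
    show ?thesis using step_travel[OF b x u act fu h(1) h(3)] unfolding a h(2) h(4) .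
  next
    fix z q m f j assume h: "du act = {z}" "b1 = 1" "upc D z q m f j (c act) r" "b2 = m - j"
    show ?thesis using step_walk[OF b x u act fu h(1) h(3)] unfolding a h(2) h(4) .
  next
    fix z q m f j assume h: "du act = {z}" "b1 = 0" "upc D z q m f j (c act) r" "q 0 = x" "f x = 0"
      "b2 = (if f r < j then (j - f r) * (m + 2) + j else 0)"
    show ?thesis using step_appr[OF b x u act fu h(1) h(3) h(4) h(5)] unfolding a h(2) h(6) .
  qed
qed

lemma cops_win_main:
  assumes Vne: "V \<noteq> {}"
  shows "cops_win V E k"
proof -
  obtain v0 where v0: "v0 \<in> V" using Vne by blast
  define c0 where "c0 = (\<lambda>_::nat. v0)"
  have c0V: "\<forall>i<k. c0 i \<in> V" using v0 by (simp add: c0_def)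
  have nV: "nbr V = {}" by (auto simp: nbr_def)
  have Ine: "I \<noteq> {}" using tree by (simp add: is_tree_def)
  have "\<forall>r0\<in>V. \<exists>n. G.winC n c0 r0"
  proof
    fix r0 assume r0: "r0 \<in> V"
    have "base V (\<lambda>_. {}) c0 r0" using connV c0V r0 nV by (simp add: base_def reg_def)
    moreover have "\<exists>u\<in>I. nbr V \<subseteq> W u" using Ine nV by auto
    moreover have "fulls V (\<lambda>_. {}) c0 r0 {}" by (simp add: fulls_def)
    ultimately have "steady V (\<lambda>_. {}) c0 r0" by (simp add: steady_def)
    then obtain b1 b2 where "Inv (card V) b1 b2 c0 r0" using start by blast
    then show "\<exists>n. G.winC n c0 r0" using G.variant[of Inv, OF inv_step] by blast
  qed
  then show ?thesis using G.cops_win_from[OF c0V] by blast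
qed

end



lemma restrict_idem: "restrict_adj S (restrict_adj S E) = restrict_adj S E"
  by (auto simp: restrict_adj_def fun_eq_iff)

lemma int_least_attained:
  fixes P :: "int \<Rightarrow> bool"
  assumes ex: "\<exists>x. P x" and lb: "\<forall>x. P x \<longrightarrow> -1 \<le> x"
  shows "P (LEAST x. P x)"
proof -
  define Q where "Q n = P (int n - 1)" for n :: nat
  obtain x where x: "P x" using ex by blast
  have "0 \<le> x + 1" using x lb by auto
  then have "int (nat (x + 1)) - 1 = x" by simp
  then have "Q (nat (x + 1))" using x by (simp add: Q_def)
  then have Qn: "Q (LEAST n. Q n)" by (rule LeastI)
  define n0 where "n0 = (LEAST n. Q n)"
  have "(LEAST x. P x) = int n0 - 1"
  proof (rule Least_equality)
    show "P (int n0 - 1)" using Qn by (simp add: Q_def n0_def)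
  next
    fix y assume "P y"
    have "0 \<le> y + 1" using \<open>P y\<close> lb by auto
    then have "int (nat (y + 1)) - 1 = y" by simp
    then have "Q (nat (y + 1))" using \<open>P y\<close> by (simp add: Q_def)
    then have "n0 \<le> nat (y + 1)" unfolding n0_def by (rule Least_le)
    then have "int n0 \<le> int (nat (y + 1))" by (simp only: of_nat_le_iff)
    then show "int n0 - 1 \<le> y" using \<open>int (nat (y + 1)) - 1 = y\<close> by linarith
  qed
  then show ?thesis using Qn by (simp add: Q_def n0_def)
qed

lemma trivial_td:
  assumes sg: "simple_graph V E"
  shows "tree_decomposition V E ({0::nat}) (\<lambda>_ _. False) (\<lambda>_. V)"
proof -
  have "is_tree {0::nat} (\<lambda>_ _. False)"
    unfolding is_tree_def simple_graph_def connected_on_def is_cycle_def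
    by (auto simp: restrict_adj_def)
  moreover have "\<forall>u\<in>V. connected_on {x\<in>{0::nat}. u \<in> V} (\<lambda>_ _. False)"
    by (auto simp: connected_on_def restrict_adj_def)
  ultimately show ?thesis using sg by (auto simp: tree_decomposition_def simple_graph_def)
qed

theorem proposition5:
  fixes V :: "'a set" and E :: "'a \<Rightarrow> 'a \<Rightarrow> bool"
  assumes "simple_graph V E" and "V \<noteq> {}"
  shows "real (cop_number V E) \<le> real_of_int (treewidth V E) / 2 + 1"
proof -
  have sg: "simple_graph V E" and Vne: "V \<noteq> {}" using assms by auto
  have finV: "finite V" using sg by (simp add: simple_graph_def)
  define P where "P w = (\<exists>(I::nat set) F W. tree_decomposition V E I F W \<and> w = td_width I W)" for w
  have exP: "\<exists>w. P w" using trivial_td[OF sg] unfolding P_def by blast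
  have lbP: "\<forall>w. P w \<longrightarrow> -1 \<le> w" unfolding P_def td_width_def by auto
  have "P (treewidth V E)" unfolding treewidth_def using int_least_attained[OF exP lbP] by (simp add: P_def)
  then obtain I0 :: "nat set" and F0 W0 where td0: "tree_decomposition V E I0 F0 W0"
    and tw: "treewidth V E = td_width I0 W0" unfolding P_def by blast
  define w where "w = treewidth V E"
  have tree0: "is_tree I0 F0" using td0 by (simp add: tree_decomposition_def)
  have WV0: "\<forall>x\<in>I0. W0 x \<subseteq> V" using td0 by (simp add: tree_decomposition_def)
  have cov0: "(\<Union>x\<in>I0. W0 x) = V" using td0 by (simp add: tree_decomposition_def)
  have edge0: "\<forall>u v. E u v \<longrightarrow> (\<exists>x\<in>I0. u \<in> W0 x \<and> v \<in> W0 x)" using td0 by (simp add: tree_decomposition_def)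
  have sub0: "\<forall>u\<in>V. connected_on {x\<in>I0. u \<in> W0 x} F0" using td0 by (simp add: tree_decomposition_def)
  have finI: "finite I0" and Ine: "I0 \<noteq> {}" using tree0 by (auto simp: is_tree_def simple_graph_def)
  define Mx where "Mx = Max ((\<lambda>x. card (W0 x)) ` I0)"
  have wM: "w = int Mx - 1" using tw by (simp add: w_def Mx_def td_width_def)
  have cardle: "card (W0 x) \<le> Mx" if "x \<in> I0" for x
    unfolding Mx_def using finI that by (intro Max_ge) auto
  obtain v0 where v0: "v0 \<in> V" using Vne by blast
  obtain x0 where x0: "x0 \<in> I0" "v0 \<in> W0 x0" using cov0 v0 by blast
  have "W0 x0 \<subseteq> V" using WV0 x0 by blast
  then have "finite (W0 x0)" using finV finite_subset by blast
  then have "1 \<le> card (W0 x0)" using x0(2) card_0_eq[of "W0 x0"] by fastforce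
  then have M1: "1 \<le> Mx" using cardle[OF x0(1)] by simp
  define k where "k = nat (w div 2) + 1"
  have k1: "k \<ge> 1" by (simp add: k_def)
  have w0: "0 \<le> w" using wM M1 by simp
  have m1: "w div 2 * 2 + w mod 2 = w" by (rule div_mult_mod_eq)
  have m2: "w mod 2 < 2" by (rule pos_mod_bound) simp
  have "0 \<le> w div 2" using w0 by simp
  then have ik: "int (nat (w div 2)) = w div 2" by (rule nat_0_le)
  have "int k = int (nat (w div 2)) + 1" by (simp add: k_def)
  then have "int k = w div 2 + 1" using ik by linarith
  then have e1: "int (2 * k) = 2 * (w div 2) + 2" by simp
  have e2: "int Mx = w + 1" using wM by simp
  have e3: "w + 1 \<le> 2 * (w div 2) + 2" using m1 m2 by linarith
  have "int Mx \<le> int (2 * k)" unfolding e1 e2 using e3 .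
  then have Mk: "Mx \<le> 2 * k" by (simp only: of_nat_le_iff)
  have realk: "real k \<le> real_of_int w / 2 + 1"
  proof -
    have "w \<ge> 0" using wM M1 by simp
    then have "real_of_int (2 * (w div 2)) \<le> real_of_int w" by linarith
    moreover have "real k = real_of_int (w div 2) + 1" using \<open>w \<ge> 0\<close> by (simp add: k_def)
    ultimately show ?thesis by linarith
  qed
  have comp_bound: "cop_number_conn C (restrict_adj C E) \<le> k" if C: "C \<in> components V E" for C
  proof -
    obtain v where v: "v \<in> V" "C = component_of V E v" using C by (auto simp: components_def)
    have Ceq: "C = compo V E v" using v by (simp add: component_of_def compo_def)
    have CV: "C \<subseteq> V" unfolding Ceq by (rule compo_sub)
    have vC: "v \<in> C" unfolding Ceq by (rule r_in_compo[OF v(1)])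
    have symE: "\<forall>x y. E x y \<longrightarrow> E y x" using sg by (simp add: simple_graph_def)
    let ?EC = "restrict_adj C E"
    have sgC: "simple_graph C ?EC"
      using sg CV finV finite_subset by (auto simp: simple_graph_def restrict_adj_def)
    have connC: "connected_on C ?EC"
      using compo_conn[OF symE v(1)] Ceq by (simp add: connected_on_def restrict_idem)
    have tdC: "tree_decomposition C ?EC I0 F0 (\<lambda>x. W0 x \<inter> C)"
      unfolding tree_decomposition_def
    proof (intro conjI ballI allI impI)
      show "is_tree I0 F0" by (rule tree0)
    next
      fix x assume "x \<in> I0" then show "W0 x \<inter> C \<subseteq> C" by blast
    next
      show "(\<Union>x\<in>I0. W0 x \<inter> C) = C" using CV cov0 by blast
    next
      fix a b assume "?EC a b"
      then have "E a b" "a \<in> C" "b \<in> C" by (auto simp: restrict_adj_def)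
      then show "\<exists>x\<in>I0. a \<in> W0 x \<inter> C \<and> b \<in> W0 x \<inter> C" using edge0 by blast
    next
      fix a assume a: "a \<in> C"
      then have "a \<in> V" using CV by blast
      then have "connected_on {x\<in>I0. a \<in> W0 x} F0" using sub0 by blast
      moreover have "{x\<in>I0. a \<in> W0 x \<inter> C} = {x\<in>I0. a \<in> W0 x}" using a by blast
      ultimately show "connected_on {x\<in>I0. a \<in> W0 x \<inter> C} F0" by simp
    qed
    have bagC: "\<forall>x\<in>I0. card (W0 x \<inter> C) \<le> 2 * k"
    proof
      fix x assume x: "x \<in> I0"
      have "W0 x \<subseteq> V" using WV0 x by blast
      then have "finite (W0 x)" using finV finite_subset by blast
      then have "card (W0 x \<inter> C) \<le> card (W0 x)" by (rule card_mono) blast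
      then show "card (W0 x \<inter> C) \<le> 2 * k" using cardle[OF x] Mk by linarith
    qed
    have cg: "copgame C ?EC I0 F0 (\<lambda>x. W0 x \<inter> C) k"
      by (rule copgame.intro[OF tdec.intro[OF sgC tdC] copgame_axioms.intro[OF connC bagC k1]])
    have "cops_win C ?EC k" using copgame.cops_win_main[OF cg] vC by blast
    then show ?thesis unfolding cop_number_conn_def using k1 by (intro Least_le) simp
  qed
  have finC: "finite (components V E)" using finV by (simp add: components_def)
  have neC: "components V E \<noteq> {}" using Vne by (simp add: components_def)
  have "cop_number V E \<le> k"
    unfolding cop_number_def using finC neC comp_bound by (subst Max_le_iff) auto
  then have "real (cop_number V E) \<le> real k" by simp
  then show ?thesis using realk by (simp add: w_def)
qed


end
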